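(* Consider the RLC circuit $-L\dot I=\Gamma V+RI-Bu_s$, $C\dot V=\Gamma^\top I-GV$ and its extended dynamics (adjoining $-L\ddot I=\Gamma\dot V+R\dot I-B\upsilon_s$, $C\ddot V=\Gamma^\top\dot I-G\dot V$, $\dot u_s=\upsilon_s$), with extended state $(I,V,\dot I,\dot V,u_s)$ and input $\upsilon_s\in\mathbb{R}^m$. Assume: $L,C$ constant symmetric positive definite; $R,G$ symmetric positive semi-definite; $I,V$ (and $\dot I,\dot V$) are measured; and there exist constants $V^\star\in\mathbb{R}^\rho_+$, $\bar u_s\in\mathbb{R}^m$ and $\bar I\in\mathbb{R}^\sigma$ with $0=\Gamma V^\star+R\bar I-B\bar u_s$, $0=\Gamma^\top\bar I-GV^\star$. Apply the control $$\upsilon_s=\frac1{k_d}\big(\mu_s-k_i(u_s-\bar u_s)-y_s\big),\qquad y_s=B^\top\dot I,$$ with $k_d>0$, $k_i>0$ and new input $\mu_s\in\mathbb{R}^m$. Then: (a) the closed-loop system defines a passive map $\mu_s\mapsto\dot u_s$; (b) if $\mu_s=0$ and any of (i) $R>0$ and $G>0$; (ii) $R>0$ and $\Gamma$ has full column rank; (iii) $G>0$ and $\Gamma^\top$ has full column rank holds, then the solution of the closed-loop system asymptotically converges to the set $\{(I,V,\dot I,\dot V,u_s):\dot V=0,\dot I=0,\dot u_s=0,u_s=\bar u_s\}$; (c) if, in addition to one of the conditions in (b) (with $\mu_s=0$), the matrix $\mathcal{A}_s=\begin{bmatrix}R&\Gamma\\\Gamma^\top&-G\end{bmatrix}$ has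 full rank, then the solution of the closed-loop system asymptotically converges to the desired operating point $(\bar I,V^\star,0,0,\bar u_s)$, which is unique.
   Context: $I\in\mathbb{R}^\sigma$, $V\in\mathbb{R}^\rho$, $u_s\in\mathbb{R}^m$; $\Gamma\in\mathbb{R}^{\sigma\times\rho}$; $B\in\mathbb{R}^{\sigma\times m}$ has full column rank. A map $\mu\mapsto z$ is passive if there is a storage function $S\ge0$ of the closed-loop state with $\dot S\le\mu^\top z$ along trajectories. *)

theory Defs
  imports "HOL-Analysis.Analysis"
begin

text \<open>Symmetric positive definite / positive semi-definite real matrices.\<close>
definition pos_def_mat :: "real^'n^'n \<Rightarrow> bool" where
  "pos_def_mat M \<longleftrightarrow> transpose M = M \<and> (\<forall>x. x \<noteq> 0 \<longrightarrow> 0 < x \<bullet> (M *v x))"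

definition psd_mat :: "real^'n^'n \<Rightarrow> bool" where
  "psd_mat M \<longleftrightarrow> transpose M = M \<and> (\<forall>x. 0 \<le> x \<bullet> (M *v x))"

text \<open>The control law upsilon_s = (1/k_d)(mu_s - k_i (u_s - ubar) - y_s), y_s = B^T Idot.\<close>
definition ctrl_law :: "real \<Rightarrow> real \<Rightarrow> real^'m \<Rightarrow> real^'m^'s \<Rightarrow> real^'m \<Rightarrow> real^'m \<Rightarrow> real^'s \<Rightarrow> real^'m"
  where "ctrl_law kd ki ub B mu us Jd = (1 / kd) *\<^sub>R (mu - ki *\<^sub>R (us - ub) - transpose B *v Jd)"

text \<open>A solution on [0,\<infinity>) of the closed-loop extended system (state (I,V,Idot,Vdot,u_s)),
  with new input mu. The components Jd, Vd are the time derivatives of I, V; the original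
  circuit equations hold together with the extended (differentiated) dynamics and u_s' = upsilon_s.\<close>
definition closed_loop_sol ::
  "real^'s^'s \<Rightarrow> real^'r^'r \<Rightarrow> real^'s^'s \<Rightarrow> real^'r^'r \<Rightarrow> real^'r^'s \<Rightarrow> real^'m^'s \<Rightarrow>
   real \<Rightarrow> real \<Rightarrow> real^'m \<Rightarrow> (real \<Rightarrow> real^'m) \<Rightarrow>
   (real \<Rightarrow> real^'s) \<Rightarrow> (real \<Rightarrow> real^'r) \<Rightarrow> (real \<Rightarrow> real^'s) \<Rightarrow> (real \<Rightarrow> real^'r) \<Rightarrow> (real \<Rightarrow> real^'m) \<Rightarrow> bool"
  where "closed_loop_sol L C R G \<Gamma> B kd ki ub mu I V Jd Vd u \<longleftrightarrow>
    (\<exists>Jdd Vdd. \<forall>t\<ge>0.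
       (I has_vector_derivative Jd t) (at t within {0..}) \<and>
       (V has_vector_derivative Vd t) (at t within {0..}) \<and>
       (Jd has_vector_derivative Jdd t) (at t within {0..}) \<and>
       (Vd has_vector_derivative Vdd t) (at t within {0..}) \<and>
       (u has_vector_derivative ctrl_law kd ki ub B (mu t) (u t) (Jd t)) (at t within {0..}) \<and>
       - (L *v Jd t) = \<Gamma> *v V t + R *v I t - B *v u t \<and>
       C *v Vd t = transpose \<Gamma> *v I t - G *v V t \<and>
       - (L *v Jdd t) = \<Gamma> *v Vd t + R *v Jd t - B *v ctrl_law kd ki ub B (mu t) (u t) (Jd t) \<and>
       C *v Vdd t = transpose \<Gamma> *v Jd t - G *v Vd t)"

text \<open>Block matrix A_s = [R, Gamma; Gamma^T, -G], indexed by 's + 'r.\<close>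
definition block_As :: "real^'s^'s \<Rightarrow> real^'r^'s \<Rightarrow> real^'r^'r \<Rightarrow> real^('s + 'r)^('s + 'r)" where
  "block_As R \<Gamma> G = (\<chi> i j. case i of
      Inl a \<Rightarrow> (case j of Inl b \<Rightarrow> R $ a $ b | Inr b \<Rightarrow> \<Gamma> $ a $ b)
    | Inr a \<Rightarrow> (case j of Inl b \<Rightarrow> \<Gamma> $ b $ a | Inr b \<Rightarrow> - (G $ a $ b)))"

end

theory Submission
  imports Defs "HOL-Real_Asymp.Real_Asymp"
begin

lemma inner_mat_transpose: "(x::real^'n) \<bullet> (A *v y) = (transpose A *v x) \<bullet> (y::real^'m)"
  by (metis dot_lmul_matrix transpose_matrix_vector transpose_transpose)

lemma inner_mat_sym: assumes "transpose M = M" shows "(x::real^'n) \<bullet> (M *v y) = y \<bullet> (M *v x)"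
  using inner_mat_transpose[of x M y] assms by (simp add: inner_commute)

lemma mat_bound: obtains K where "K > 0" "\<And>x. norm ((M::real^'n^'m) *v x) \<le> K * norm x"
  using linear_bounded_pos[OF matrix_vector_mul_linear[of M]] by blast

lemma inj_below: assumes "rank (M::real^'n^'m) = CARD('n)"
  obtains g where "g > 0" "\<And>x. g * norm x \<le> norm (M *v x)"
  using linear_inj_bounded_below_pos[OF matrix_vector_mul_linear[of M]] assms full_rank_injective
  by blast

lemma pd_lower: assumes "pos_def_mat (M::real^'n^'n)"
  obtains l where "l > 0" "\<And>x. l * (norm x)^2 \<le> x \<bullet> (M *v x)"
proof -
  let ?q = "\<lambda>x::real^'n. x \<bullet> (M *v x)"
  have cont: "continuous_on (sphere 0 1) ?q"
    by (intro continuous_intros continuous_on_compose2[OF bounded_linear.continuous_on[OF matrix_vector_mul_bounded_linear]]) auto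
  have ne: "sphere (0::real^'n) 1 \<noteq> {}"
    using vector_choose_size[of 1] by auto
  obtain x0 where x0: "x0 \<in> sphere 0 1" "\<And>y. y \<in> sphere 0 1 \<Longrightarrow> ?q x0 \<le> ?q y"
    using continuous_attains_inf[OF compact_sphere ne cont] by blast
  have "x0 \<noteq> 0" using x0 by auto
  hence pos: "?q x0 > 0" using assms unfolding pos_def_mat_def by auto
  show ?thesis
  proof (rule that[OF pos])
    fix x :: "real^'n"
    show "?q x0 * (norm x)^2 \<le> ?q x"
    proof (cases "x = 0")
      case True then show ?thesis by simp
    next
      case False
      let ?u = "(1 / norm x) *\<^sub>R x"
      have u: "?u \<in> sphere 0 1" using False by simp
      have xe: "x = norm x *\<^sub>R ?u" using False by simp
      have "?q x = (norm x)^2 * ?q ?u"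
        by (subst xe, subst (2) xe) (simp add: matrix_vector_mult_scaleR power2_eq_square)
      moreover have "?q x0 * (norm x)^2 \<le> ?q ?u * (norm x)^2"
        by (rule mult_right_mono[OF x0(2)[OF u]]) simp
      ultimately show ?thesis by (simp only: mult.commute)
    qed
  qed
qed

lemma inner_deriv:
  assumes "(f has_vector_derivative f') (at t within S)" "(g has_vector_derivative g') (at t within S)"
  shows "((\<lambda>t. f t \<bullet> g t) has_real_derivative (f t \<bullet> g' + f' \<bullet> g t)) (at t within S)"
  using bounded_bilinear.has_vector_derivative[OF bounded_bilinear_inner assms]
  by (simp add: has_real_derivative_iff_has_vector_derivative)

lemma mat_deriv:
  assumes "(f has_vector_derivative f') F"
  shows "((\<lambda>t. (M::real^'n^'m) *v f t) has_vector_derivative M *v f') F"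
  using bounded_linear.has_vector_derivative[OF matrix_vector_mul_bounded_linear assms] .

lemma exp_decay:
  fixes V D :: "real \<Rightarrow> real"
  assumes d: "\<And>t. t \<ge> 0 \<Longrightarrow> (V has_real_derivative D t) (at t within {0..})"
    and le: "\<And>t. t \<ge> 0 \<Longrightarrow> D t \<le> - lam * V t"
    and t: "t \<ge> 0"
  shows "V t \<le> V 0 * exp (- lam * t)"
proof -
  let ?h = "\<lambda>s. V s * exp (lam * s)"
  have hd: "(?h has_real_derivative (D s * exp (lam * s) + V s * (exp (lam * s) * lam))) (at s within {0..})"
    if "s \<ge> 0" for s
  proof -
    have "((\<lambda>s. exp (lam * s)) has_real_derivative exp (lam * s) * lam) (at s within {0..})"
      by (auto intro!: derivative_eq_intros)
    from DERIV_mult[OF d[OF that] this] show ?thesis by (simp add: algebra_simps)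
  qed
  have cont: "continuous_on {0..} ?h"
    unfolding continuous_on_eq_continuous_within
  proof
    fix s :: real assume "s \<in> {0..}"
    then show "continuous (at s within {0..}) ?h" using hd[of s] DERIV_continuous by auto
  qed
  have "?h t \<le> ?h 0"
  proof (rule DERIV_nonpos_imp_decreasing_open[OF t])
    fix s assume s: "0 < s" "s < t"
    have "at s within {0..} = at s" by (rule at_within_interior) (use s in simp)
    then have "(?h has_real_derivative (D s * exp (lam * s) + V s * (exp (lam * s) * lam))) (at s)"
      using hd[of s] s by simp
    moreover have "D s * exp (lam * s) + V s * (exp (lam * s) * lam) \<le> 0"
    proof -
      have "D s * exp (lam * s) \<le> (- lam * V s) * exp (lam * s)"
        using le[of s] s by (intro mult_right_mono) auto
      then show ?thesis by (simp add: algebra_simps)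
    qed
    ultimately show "\<exists>y. (?h has_real_derivative y) (at s) \<and> y \<le> 0" by blast
  next
    show "continuous_on {0..t} ?h"
      by (rule continuous_on_subset[OF cont]) auto
  qed
  then have "V t * exp (lam * t) \<le> V 0" by simp
  then have "V t * exp (lam * t) * exp (- lam * t) \<le> V 0 * exp (- lam * t)"
    by (intro mult_right_mono) auto
  moreover have "exp (lam * t) * exp (- lam * t) = 1" by (simp add: exp_minus_inverse)
  ultimately show ?thesis by (metis mult.assoc mult.right_neutral)
qed

lemma young_aux: fixes g K m k :: real assumes "g > 0"
  shows "K * (m * k) \<le> g/2 * m^2 + K^2/(2*g) * k^2"
proof -
  have "0 \<le> (g * m - K * k)^2" by simp
  hence "0 \<le> g^2 * m^2 - 2 * g * (K * (m * k)) + K^2 * k^2" by (simp add: power2_eq_square algebra_simps)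
  hence "2 * g * (K * (m * k)) \<le> g^2 * m^2 + K^2 * k^2" by linarith
  hence "K * (m * k) \<le> (g^2 * m^2 + K^2 * k^2) / (2*g)" using assms by (simp add: field_simps)
  also have "\<dots> = g/2 * m^2 + K^2/(2*g) * k^2" using assms by (simp add: field_simps power2_eq_square)
  finally show ?thesis .
qed

lemma lyap_real:
  fixes d g K K1 K2 m0 M0 :: real
  assumes pos: "d > 0" "g > 0" "K > 0" "K1 > 0" "K2 > 0" "m0 > 0" "M0 > 0"
  obtains eps lam m1 where "eps > 0" "lam > 0" "m1 > 0"
   "\<And>k m Z S0 W D0 DW. 0 \<le> k \<Longrightarrow> 0 \<le> m \<Longrightarrow> m0*Z \<le> S0 \<Longrightarrow> S0 \<le> M0*Z \<Longrightarrow> \<bar>W\<bar> \<le> K*(m*k)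
     \<Longrightarrow> D0 \<le> -d*k^2 \<Longrightarrow> DW \<le> -g*m^2 + K*(m*k + k^2) \<Longrightarrow> (k+m)^2 \<le> K1*Z \<Longrightarrow> Z \<le> K2*(k+m)^2
     \<Longrightarrow> m1*Z \<le> S0 + eps*W \<and> D0 + eps*DW \<le> -lam*(S0+eps*W)"
proof -
  define A where "A = K + K^2/(2*g)"
  have A: "A > 0" using pos unfolding A_def by (simp add: add_pos_nonneg)
  define eps where "eps = min (m0/(K*K1)) (d/(2*A))"
  have eps: "eps > 0" using pos A by (simp add: eps_def)
  have eps1: "eps * (K*K1) \<le> m0"
  proof -
    have "eps \<le> m0/(K*K1)" by (simp add: eps_def)
    thus ?thesis using pos by (simp add: pos_le_divide_eq)
  qed
  have eps2: "eps * A \<le> d/2"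
  proof -
    have "eps \<le> d/(2*A)" by (simp add: eps_def)
    hence "eps * (2*A) \<le> d" using A by (simp add: pos_le_divide_eq)
    thus ?thesis by simp
  qed
  define c where "c = min (d/2) (eps*g/2)"
  have c: "c > 0" using pos eps by (simp add: c_def)
  define Mv where "Mv = M0 + m0"
  have Mv: "Mv > 0" using pos by (simp add: Mv_def)
  define lam where "lam = c / (2*K2*Mv)"
  have lam: "lam > 0" using c Mv pos by (simp add: lam_def)
  show ?thesis
  proof (rule that[OF eps lam, of "m0/2"])
    show "m0/2 > 0" using pos by simp
    fix k m Z S0 W D0 DW :: real
    assume k: "0 \<le> k" and m: "0 \<le> m" and S1: "m0*Z \<le> S0" and S2: "S0 \<le> M0*Z"
      and W: "\<bar>W\<bar> \<le> K*(m*k)" and D0: "D0 \<le> -d*k^2" and DW: "DW \<le> -g*m^2 + K*(m*k + k^2)"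
      and Z1: "(k+m)^2 \<le> K1*Z" and Z2: "Z \<le> K2*(k+m)^2"
    have "0 \<le> K1 * Z" using Z1 zero_le_power2[of "k+m"] by linarith
    hence Z0: "Z \<ge> 0" using pos(4) by (simp add: zero_le_mult_iff)
    have mk: "m*k \<le> (k+m)^2/2"
    proof -
      have "0 \<le> (k - m)^2" by simp
      thus ?thesis by (simp add: power2_eq_square algebra_simps)
    qed
    have mk2: "m*k \<le> K1*Z/2" using mk Z1 by linarith
    have epsW: "\<bar>eps*W\<bar> \<le> m0*Z/2"
    proof -
      have "\<bar>eps*W\<bar> = eps * \<bar>W\<bar>" using eps by (simp add: abs_mult)
      also have "\<dots> \<le> eps * (K*(m*k))" using W eps by (intro mult_left_mono) auto
      also have "\<dots> \<le> eps * (K*(K1*Z/2))" using mk2 eps pos by (intro mult_left_mono) auto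
      also have "\<dots> = (eps*(K*K1)) * Z / 2" by simp
      also have "\<dots> \<le> m0 * Z / 2" using eps1 Z0 by (intro divide_right_mono mult_right_mono) auto
      finally show ?thesis .
    qed
    have V1: "m0/2*Z \<le> S0 + eps*W" using epsW S1 by linarith
    have "m0*Z/2 \<le> m0*Z" using Z0 pos by simp
    moreover have "Mv*Z = M0*Z + m0*Z" by (simp add: Mv_def algebra_simps)
    ultimately have V2: "S0 + eps*W \<le> Mv*Z" using epsW S2 by linarith
    have Y: "K*(m*k) \<le> g/2 * m^2 + K^2/(2*g) * k^2" by (rule young_aux[OF pos(2)])
    have "D0 + eps*DW \<le> -d*k^2 + eps*(-g*m^2 + K*(m*k + k^2))"
    proof -
      have "eps*DW \<le> eps*(-g*m^2 + K*(m*k + k^2))" using DW eps by (intro mult_left_mono) auto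
      thus ?thesis using D0 by linarith
    qed
    also have "\<dots> = -d*k^2 - eps*g*m^2 + eps*(K*(m*k)) + eps*K*k^2" by (simp add: algebra_simps)
    also have "\<dots> \<le> -d*k^2 - eps*g*m^2 + eps*(g/2 * m^2 + K^2/(2*g) * k^2) + eps*K*k^2"
    proof -
      have "eps*(K*(m*k)) \<le> eps*(g/2 * m^2 + K^2/(2*g) * k^2)" using Y eps by (intro mult_left_mono) auto
      thus ?thesis by linarith
    qed
    also have "\<dots> = -(d - eps*A)*k^2 - (eps*g/2)*m^2" by (simp add: A_def algebra_simps)
    also have "\<dots> \<le> -(d/2)*k^2 - (eps*g/2)*m^2"
    proof -
      have "(d/2)*k^2 \<le> (d - eps*A)*k^2" using eps2 by (intro mult_right_mono) auto
      thus ?thesis by linarith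
    qed
    also have "\<dots> \<le> -c*k^2 - c*m^2"
    proof -
      have "c*k^2 \<le> (d/2)*k^2" by (intro mult_right_mono) (auto simp: c_def)
      moreover have "c*m^2 \<le> (eps*g/2)*m^2" by (intro mult_right_mono) (auto simp: c_def)
      ultimately show ?thesis by linarith
    qed
    also have "\<dots> \<le> -c/2*(k+m)^2"
    proof -
      have "(k+m)^2 \<le> 2*(k^2+m^2)"
      proof -
        have "0 \<le> (k - m)^2" by simp
        thus ?thesis by (simp add: power2_eq_square algebra_simps)
      qed
      hence "c/2*(k+m)^2 \<le> c/2*(2*(k^2+m^2))" using c by (intro mult_left_mono) auto
      thus ?thesis by (simp add: algebra_simps)
    qed
    also have "\<dots> \<le> -c/2*(Z/K2)"
    proof -
      have "Z/K2 \<le> (k+m)^2" using Z2 pos by (simp add: divide_le_eq mult.commute)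
      hence "c/2*(Z/K2) \<le> c/2*(k+m)^2" using c by (intro mult_left_mono) auto
      thus ?thesis by linarith
    qed
    also have "\<dots> \<le> -lam*(S0+eps*W)"
    proof -
      have "lam*(S0+eps*W) \<le> lam*(Mv*Z)" using V2 lam by (intro mult_left_mono) auto
      also have "\<dots> = c/2*(Z/K2)" unfolding lam_def using Mv pos by (simp add: field_simps)
      finally show ?thesis by linarith
    qed
    finally show "m0/2*Z \<le> S0 + eps*W \<and> D0 + eps*DW \<le> -lam*(S0+eps*W)" using V1 by simp
  qed
qed

lemma core_conv:
  fixes S0 W D0 DW k m Z :: "real \<Rightarrow> real"
  assumes pos: "d > 0" "g > 0" "K > 0" "K1 > 0" "K2 > 0" "m0 > 0" "M0 > 0"
  and dS: "\<And>t. t \<ge> 0 \<Longrightarrow> (S0 has_real_derivative D0 t) (at t within {0..})"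
  and dW: "\<And>t. t \<ge> 0 \<Longrightarrow> (W has_real_derivative DW t) (at t within {0..})"
  and h: "\<And>t. t \<ge> 0 \<Longrightarrow> 0 \<le> k t \<and> 0 \<le> m t \<and> m0*Z t \<le> S0 t \<and> S0 t \<le> M0*Z t \<and> \<bar>W t\<bar> \<le> K*(m t*k t)
     \<and> D0 t \<le> -d*(k t)^2 \<and> DW t \<le> -g*(m t)^2 + K*(m t*k t + (k t)^2) \<and> (k t+m t)^2 \<le> K1*Z t \<and> Z t \<le> K2*(k t+m t)^2"
  shows "(Z \<longlongrightarrow> 0) at_top"
proof (rule lyap_real[OF pos])
  fix eps lam m1 :: real
  assume e: "eps > 0" "lam > 0" "m1 > 0"
    and L: "\<And>k m Z S0 W D0 DW. 0 \<le> k \<Longrightarrow> 0 \<le> m \<Longrightarrow> m0*Z \<le> S0 \<Longrightarrow> S0 \<le> M0*Z \<Longrightarrow> \<bar>W\<bar> \<le> K*(m*k)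
     \<Longrightarrow> D0 \<le> -d*k^2 \<Longrightarrow> DW \<le> -g*m^2 + K*(m*k + k^2) \<Longrightarrow> (k+m)^2 \<le> K1*Z \<Longrightarrow> Z \<le> K2*(k+m)^2
     \<Longrightarrow> m1*Z \<le> S0 + eps*W \<and> D0 + eps*DW \<le> -lam*(S0+eps*W)"
  let ?V = "\<lambda>t. S0 t + eps * W t"
  have LL: "m1 * Z t \<le> ?V t \<and> D0 t + eps * DW t \<le> -lam * ?V t" if "t \<ge> 0" for t
    using h[OF that] by (intro L[of "k t" "m t"]) auto
  have dV: "(?V has_real_derivative (D0 t + eps * DW t)) (at t within {0..})" if "t \<ge> 0" for t
    using DERIV_add[OF dS[OF that] DERIV_cmult[OF dW[OF that], of eps]] .
  have dec: "?V t \<le> ?V 0 * exp (- lam * t)" if "t \<ge> 0" for t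
    by (rule exp_decay[where D = "\<lambda>t. D0 t + eps * DW t"]) (use dV LL that in auto)
  have Z0: "0 \<le> Z t" if "t \<ge> 0" for t
  proof -
    have "0 \<le> K1 * Z t" using h[OF that] zero_le_power2[of "k t + m t"] by linarith
    thus ?thesis using pos(4) by (simp add: zero_le_mult_iff)
  qed
  have ub: "Z t \<le> ?V 0 * exp (- lam * t) / m1" if "t \<ge> 0" for t
  proof -
    have "m1 * Z t \<le> ?V 0 * exp (- lam * t)" using LL[OF that] dec[OF that] by linarith
    thus ?thesis using e by (simp add: field_simps)
  qed
  have lim: "((\<lambda>t. ?V 0 * exp (- lam * t) / m1) \<longlongrightarrow> 0) at_top"
  proof -
    have "((\<lambda>t. exp (- lam * t)) \<longlongrightarrow> 0) at_top" using e(2) by real_asymp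
    hence "((\<lambda>t. ?V 0 * exp (- lam * t)) \<longlongrightarrow> ?V 0 * 0) at_top" by (intro tendsto_mult) auto
    hence "((\<lambda>t. ?V 0 * exp (- lam * t) / m1) \<longlongrightarrow> ?V 0 * 0 / m1) at_top" by (intro tendsto_divide) (use e in auto)
    thus ?thesis by simp
  qed
  show ?thesis
  proof (rule tendsto_sandwich[OF _ _ tendsto_const lim])
    show "\<forall>\<^sub>F t in at_top. 0 \<le> Z t" using Z0 by (auto simp: eventually_at_top_linorder)
    show "\<forall>\<^sub>F t in at_top. Z t \<le> ?V 0 * exp (- lam * t) / m1" using ub by (auto simp: eventually_at_top_linorder)
  qed
qed

definition Sf :: "real^'s^'s \<Rightarrow> real^'r^'r \<Rightarrow> real \<Rightarrow> real^'m \<Rightarrow> (real^'s) \<times> (real^'r) \<times> (real^'s) \<times> (real^'r) \<times> (real^'m) \<Rightarrow> real" where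
  "Sf L C ki ub = (\<lambda>(I,V,x,y,u). (x \<bullet> (L *v x))/2 + (y \<bullet> (C *v y))/2 + ki/2 * ((u-ub) \<bullet> (u-ub)))"

lemma ctrl_rel: assumes "kd > 0"
  shows "ki *\<^sub>R (u - ub) + transpose B *v x = mu - kd *\<^sub>R ctrl_law kd ki ub B mu u x"
  using assms by (simp add: ctrl_law_def algebra_simps)

lemma S_deriv:
  fixes L R :: "real^'s^'s" and C G :: "real^'r^'r" and \<Gamma> :: "real^'r^'s" and B :: "real^'m^'s"
  assumes symL: "transpose L = L" and symC: "transpose C = C" and kd: "kd > 0"
    and dx: "(x has_vector_derivative x') (at t within S)"
    and dy: "(y has_vector_derivative y') (at t within S)"
    and du: "(u has_vector_derivative v) (at t within S)"
    and e1: "- (L *v x') = \<Gamma> *v y t + R *v x t - B *v v"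
    and e2: "C *v y' = transpose \<Gamma> *v x t - G *v y t"
    and vdef: "v = ctrl_law kd ki ub B mu (u t) (x t)"
  shows "((\<lambda>\<tau>. Sf L C ki ub (I \<tau>, V \<tau>, x \<tau>, y \<tau>, u \<tau>)) has_real_derivative
      (- (x t \<bullet> (R *v x t)) - y t \<bullet> (G *v y t) + mu \<bullet> v - kd * (v \<bullet> v))) (at t within S)"
proof -
  have dw: "((\<lambda>\<tau>. u \<tau> - ub) has_vector_derivative v) (at t within S)"
    using du by (simp add: has_vector_derivative_diff_const)
  note d1 = inner_deriv[OF dx mat_deriv[OF dx, of L]]
  note d2 = inner_deriv[OF dy mat_deriv[OF dy, of C]]
  note d3 = inner_deriv[OF dw dw]
  have raw: "((\<lambda>\<tau>. Sf L C ki ub (I \<tau>, V \<tau>, x \<tau>, y \<tau>, u \<tau>)) has_real_derivative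
     ((x t \<bullet> (L *v x') + x' \<bullet> (L *v x t))/2 + (y t \<bullet> (C *v y') + y' \<bullet> (C *v y t))/2
       + ki/2 * ((u t - ub) \<bullet> v + v \<bullet> (u t - ub)))) (at t within S)"
    unfolding Sf_def using DERIV_add[OF DERIV_add[OF DERIV_cdivide[OF d1, of 2] DERIV_cdivide[OF d2, of 2]] DERIV_cmult[OF d3, of "ki/2"]]
    by simp
  have s1: "x' \<bullet> (L *v x t) = x t \<bullet> (L *v x')" using inner_mat_sym[OF symL] by simp
  have s2: "y' \<bullet> (C *v y t) = y t \<bullet> (C *v y')" using inner_mat_sym[OF symC] by simp
  have s3: "v \<bullet> (u t - ub) = (u t - ub) \<bullet> v" by (simp add: inner_commute)
  have xL: "x t \<bullet> (L *v x') = - (x t \<bullet> (\<Gamma> *v y t)) - x t \<bullet> (R *v x t) + (transpose B *v x t) \<bullet> v"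
  proof -
    have "x t \<bullet> (L *v x') = - (x t \<bullet> (- (L *v x')))" by simp
    also have "\<dots> = - (x t \<bullet> (\<Gamma> *v y t)) - x t \<bullet> (R *v x t) + x t \<bullet> (B *v v)"
      unfolding e1 by (simp add: inner_diff_right inner_add_right)
    also have "x t \<bullet> (B *v v) = (transpose B *v x t) \<bullet> v" by (rule inner_mat_transpose)
    finally show ?thesis .
  qed
  have yC: "y t \<bullet> (C *v y') = x t \<bullet> (\<Gamma> *v y t) - y t \<bullet> (G *v y t)"
  proof -
    have "y t \<bullet> (C *v y') = y t \<bullet> (transpose \<Gamma> *v x t) - y t \<bullet> (G *v y t)"
      unfolding e2 by (simp add: inner_diff_right)
    also have "y t \<bullet> (transpose \<Gamma> *v x t) = x t \<bullet> (\<Gamma> *v y t)"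
      using inner_mat_transpose[of "x t" \<Gamma> "y t"] by (simp add: inner_commute)
    finally show ?thesis .
  qed
  have cr: "ki * ((u t - ub) \<bullet> v) + (transpose B *v x t) \<bullet> v = mu \<bullet> v - kd * (v \<bullet> v)"
  proof -
    have "ki * ((u t - ub) \<bullet> v) + (transpose B *v x t) \<bullet> v = (ki *\<^sub>R (u t - ub) + transpose B *v x t) \<bullet> v"
      by (simp add: inner_add_left)
    also have "\<dots> = (mu - kd *\<^sub>R v) \<bullet> v" using ctrl_rel[OF kd, of ki "u t" ub B "x t" mu] vdef by simp
    also have "\<dots> = mu \<bullet> v - kd * (v \<bullet> v)" by (simp add: inner_diff_left)
    finally show ?thesis .
  qed
  have aux: "(a1 + a1)/2 + (b1 + b1)/2 + k/2*(c1+c1) = a1 + b1 + k*(c1::real)" for a1 b1 c1 k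
    by (simp add: algebra_simps)
  show ?thesis
  proof (rule DERIV_cong[OF raw])
    show "(x t \<bullet> (L *v x') + x' \<bullet> (L *v x t))/2 + (y t \<bullet> (C *v y') + y' \<bullet> (C *v y t))/2
       + ki/2 * ((u t - ub) \<bullet> v + v \<bullet> (u t - ub)) =
      (- (x t \<bullet> (R *v x t)) - y t \<bullet> (G *v y t) + mu \<bullet> v - kd * (v \<bullet> v))"
      unfolding s1 s2 s3 aux using xL yC cr by linarith
  qed
qed

lemma ip_bound: "norm p \<le> \<alpha> \<Longrightarrow> norm q \<le> \<beta> \<Longrightarrow> \<bar>p \<bullet> q\<bar> \<le> \<alpha> * \<beta>"
  by (metis Cauchy_Schwarz_ineq2 mult_mono norm_ge_zero order_trans)

lemma pd_inv: assumes "pos_def_mat (M::real^'n^'n)"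
  obtains l where "l > 0" "\<And>x. l * norm x \<le> norm (M *v x)"
proof -
  obtain l where l: "l > 0" "\<And>x. l * (norm x)^2 \<le> x \<bullet> (M *v x)" using pd_lower[OF assms] by blast
  show ?thesis
  proof (rule that[OF l(1)])
    fix x :: "real^'n"
    show "l * norm x \<le> norm (M *v x)"
    proof (cases "x = 0")
      case True thus ?thesis by simp
    next
      case False
      have "l * norm x * norm x \<le> norm x * norm (M *v x)"
        using l(2)[of x] Cauchy_Schwarz_ineq2[of x "M *v x"] by (simp add: power2_eq_square)
      thus ?thesis using False by (simp add: mult.commute)
    qed
  qed
qed

lemma psd_nonneg: "psd_mat M \<Longrightarrow> 0 \<le> x \<bullet> (M *v x)" by (simp add: psd_mat_def)
lemma pd_nonneg: "pos_def_mat M \<Longrightarrow> 0 \<le> x \<bullet> (M *v x)"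
  unfolding pos_def_mat_def by (cases "x = 0") (auto intro: less_imp_le)

lemma quad_upper: "norm ((M::real^'n^'n) *v x) \<le> K * norm x \<Longrightarrow> x \<bullet> (M *v x) \<le> K * (norm x)^2"
  using ip_bound[of x "norm x" "M *v x" "K * norm x"] by (simp add: power2_eq_square abs_le_iff mult.commute mult.left_commute)

definition blk :: "real^'s \<Rightarrow> real^'r \<Rightarrow> real^('s+'r)" where
  "blk p q = (\<chi> i. case i of Inl a \<Rightarrow> p$a | Inr b \<Rightarrow> q$b)"

lemma blk_nth [simp]: "blk p q $ Inl a = p $ a" "blk p q $ Inr b = q $ b"
  by (simp_all add: blk_def)

lemma sum_UNIV_plus: "sum f (UNIV::('a::finite + 'b::finite) set) = sum (\<lambda>a. f (Inl a)) UNIV + sum (\<lambda>b. f (Inr b)) UNIV"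
  using sum.Plus[of "UNIV::'a set" "UNIV::'b set" f] by (simp add: comp_def)

lemma blk_mult:
  fixes R :: "real^'s^'s" and G :: "real^'r^'r" and \<Gamma> :: "real^'r^'s"
  shows "block_As R \<Gamma> G *v blk p q = blk (R *v p + \<Gamma> *v q) (transpose \<Gamma> *v p - G *v q)"
proof (subst vec_eq_iff, intro allI)
  fix i :: "'s + 'r"
  show "(block_As R \<Gamma> G *v blk p q) $ i = blk (R *v p + \<Gamma> *v q) (transpose \<Gamma> *v p - G *v q) $ i"
    by (cases i) (simp_all add: matrix_vector_mult_def block_As_def sum_UNIV_plus transpose_def sum_negf)
qed

lemma blk_eq0: assumes h: "blk p q = 0" shows "p = 0 \<and> q = 0"
proof -
  have "p $ a = 0" for a using arg_cong[OF h, of "\<lambda>z. z $ Inl a"] by simp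
  moreover have "q $ b = 0" for b using arg_cong[OF h, of "\<lambda>z. z $ Inr b"] by simp
  ultimately show ?thesis by (simp add: vec_eq_iff)
qed

lemma blk_inj:
  fixes R :: "real^'s^'s" and G :: "real^'r^'r" and \<Gamma> :: "real^'r^'s"
  assumes "rank (block_As R \<Gamma> G) = CARD('s+'r)"
    and "R *v p + \<Gamma> *v q = 0" "transpose \<Gamma> *v p - G *v q = 0"
  shows "p = 0 \<and> q = (0::real^'r)"
proof -
  have "inj ((*v) (block_As R \<Gamma> G))" using assms(1) full_rank_injective by blast
  hence inj0: "\<And>x. block_As R \<Gamma> G *v x = 0 \<Longrightarrow> x = 0"
    using linear_injective_0[OF matrix_vector_mul_linear] by blast
  have z: "blk (0::real^'s) (0::real^'r) = 0" by (auto simp: vec_eq_iff blk_def split: sum.split)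
  have "block_As R \<Gamma> G *v blk p q = 0"
    unfolding blk_mult assms(2,3) by (rule z)
  hence "blk p q = 0" by (rule inj0)
  thus ?thesis by (rule blk_eq0)
qed

lemma blk_conv:
  fixes R :: "real^'s^'s" and G :: "real^'r^'r" and \<Gamma> :: "real^'r^'s"
  assumes "rank (block_As R \<Gamma> G) = CARD('s+'r)"
    and l1: "((\<lambda>t. R *v p t + \<Gamma> *v q t) \<longlongrightarrow> 0) F" and l2: "((\<lambda>t. transpose \<Gamma> *v p t - G *v q t) \<longlongrightarrow> 0) F"
  shows "(p \<longlongrightarrow> 0) F \<and> (q \<longlongrightarrow> 0) F"
proof -
  obtain g where g: "g > 0" "\<And>x. g * norm x \<le> norm (block_As R \<Gamma> G *v x)" using inj_below[OF assms(1)] by blast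
  have Az: "((\<lambda>t. block_As R \<Gamma> G *v blk (p t) (q t)) \<longlongrightarrow> 0) F"
    unfolding blk_mult
  proof (rule vec_tendstoI)
    fix i :: "'s+'r"
    show "((\<lambda>t. blk (R *v p t + \<Gamma> *v q t) (transpose \<Gamma> *v p t - G *v q t) $ i) \<longlongrightarrow> 0 $ i) F"
      using tendsto_vec_nth[OF l1] tendsto_vec_nth[OF l2] by (cases i) auto
  qed
  have z: "((\<lambda>t. blk (p t) (q t)) \<longlongrightarrow> 0) F"
  proof (rule Lim_null_comparison)
    show "\<forall>\<^sub>F t in F. norm (blk (p t) (q t)) \<le> norm (block_As R \<Gamma> G *v blk (p t) (q t)) / g"
      using g by (intro always_eventually allI) (simp add: field_simps mult.commute)
    show "((\<lambda>t. norm (block_As R \<Gamma> G *v blk (p t) (q t)) / g) \<longlongrightarrow> 0) F"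
      using tendsto_divide[OF tendsto_norm[OF Az] tendsto_const[of g]] g by simp
  qed
  have "(p \<longlongrightarrow> 0) F"
    by (rule vec_tendstoI) (use tendsto_vec_nth[OF z, of "Inl _"] in simp)
  moreover have "(q \<longlongrightarrow> 0) F"
    by (rule vec_tendstoI) (use tendsto_vec_nth[OF z, of "Inr _"] in simp)
  ultimately show ?thesis ..
qed

lemma sum_bound:
  fixes a b c e kd ki Kb :: real
  assumes "0\<le>a" "0\<le>b" "0\<le>c" "0\<le>e" "kd>0" "ki>0" "Kb>0" "kd*e \<le> ki*c + Kb*a"
  shows "(a+b+e)^2 \<le> (1 + (ki+Kb)/kd)^2 * (a+b+c)^2"
proof -
  have "ki*c + Kb*a \<le> (ki+Kb)*(a+b+c)" using assms by (simp add: algebra_simps add_mono mult_left_mono add_increasing2 mult_nonneg_nonneg)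
  hence "kd*e \<le> (ki+Kb)*(a+b+c)" using assms by linarith
  hence "e \<le> (ki+Kb)/kd*(a+b+c)" using assms by (simp add: field_simps)
  hence "a+b+e \<le> (a+b+c) + (ki+Kb)/kd*(a+b+c)" using assms by linarith
  hence "a+b+e \<le> (1 + (ki+Kb)/kd)*(a+b+c)" by (simp only: distrib_right mult_1_left)
  hence "(a+b+e)^2 \<le> ((1 + (ki+Kb)/kd)*(a+b+c))^2" using assms by (intro power_mono) auto
  thus ?thesis by (simp add: power_mult_distrib)
qed

lemma sq3: fixes a b c :: real shows "(a+b+c)^2 \<le> 3*(a^2+b^2+c^2)"
proof -
  have "0 \<le> (a-b)^2 + (b-c)^2 + (a-c)^2" by simp
  thus ?thesis by (simp add: power2_eq_square algebra_simps)
qed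

lemma sq3': fixes a b c :: real assumes "0\<le>a" "0\<le>b" "0\<le>c" shows "a^2+b^2+c^2 \<le> (a+b+c)^2"
  using assms by (simp add: power2_eq_square algebra_simps)

context
  fixes L R :: "real^'s^'s" and C G :: "real^'r^'r" and \<Gamma> :: "real^'r^'s" and B :: "real^'m^'s"
    and kd ki :: real and ub :: "real^'m"
    and I Jd Jdd :: "real \<Rightarrow> real^'s" and V Vd Vdd :: "real \<Rightarrow> real^'r" and u :: "real \<Rightarrow> real^'m"
  assumes Lpd: "pos_def_mat L" and Cpd: "pos_def_mat C" and Rpsd: "psd_mat R" and Gpsd: "psd_mat G"
    and kd: "kd > 0" and ki: "ki > 0"
    and sol: "\<And>t. t \<ge> 0 \<Longrightarrow>
       (I has_vector_derivative Jd t) (at t within {0..}) \<and>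
       (V has_vector_derivative Vd t) (at t within {0..}) \<and>
       (Jd has_vector_derivative Jdd t) (at t within {0..}) \<and>
       (Vd has_vector_derivative Vdd t) (at t within {0..}) \<and>
       (u has_vector_derivative ctrl_law kd ki ub B 0 (u t) (Jd t)) (at t within {0..}) \<and>
       - (L *v Jd t) = \<Gamma> *v V t + R *v I t - B *v u t \<and>
       C *v Vd t = transpose \<Gamma> *v I t - G *v V t \<and>
       - (L *v Jdd t) = \<Gamma> *v Vd t + R *v Jd t - B *v ctrl_law kd ki ub B 0 (u t) (Jd t) \<and>
       C *v Vdd t = transpose \<Gamma> *v Jd t - G *v Vd t"
begin

abbreviation "vv t \<equiv> ctrl_law kd ki ub B 0 (u t) (Jd t)"
abbreviation "D0 t \<equiv> - (Jd t \<bullet> (R *v Jd t)) - Vd t \<bullet> (G *v Vd t) + 0 \<bullet> vv t - kd * (vv t \<bullet> vv t)"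

lemma mat_consts:
  obtains Kb l where "Kb > 0" "l > 0"
    "\<And>x. norm (L *v x) \<le> Kb * norm x" "\<And>x. norm (R *v x) \<le> Kb * norm x"
    "\<And>x. norm (C *v x) \<le> Kb * norm x" "\<And>x. norm (G *v x) \<le> Kb * norm x"
    "\<And>x. norm (\<Gamma> *v x) \<le> Kb * norm x" "\<And>x. norm (transpose \<Gamma> *v x) \<le> Kb * norm x"
    "\<And>x. norm (B *v x) \<le> Kb * norm x" "\<And>x. norm (transpose B *v x) \<le> Kb * norm x"
    "\<And>x. l * (norm x)^2 \<le> x \<bullet> (L *v x)" "\<And>x. l * (norm x)^2 \<le> x \<bullet> (C *v x)"
    "\<And>x. l * norm x \<le> norm (L *v x)" "\<And>x. l * norm x \<le> norm (C *v x)"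
proof -
  obtain k1 where k1: "k1 > 0" "\<And>x. norm (L *v x) \<le> k1 * norm x" using mat_bound[of "L"] by blast
  obtain k2 where k2: "k2 > 0" "\<And>x. norm (R *v x) \<le> k2 * norm x" using mat_bound[of "R"] by blast
  obtain k3 where k3: "k3 > 0" "\<And>x. norm (C *v x) \<le> k3 * norm x" using mat_bound[of "C"] by blast
  obtain k4 where k4: "k4 > 0" "\<And>x. norm (G *v x) \<le> k4 * norm x" using mat_bound[of "G"] by blast
  obtain k5 where k5: "k5 > 0" "\<And>x. norm (\<Gamma> *v x) \<le> k5 * norm x" using mat_bound[of "\<Gamma>"] by blast
  obtain k6 where k6: "k6 > 0" "\<And>x. norm (transpose \<Gamma> *v x) \<le> k6 * norm x" using mat_bound[of "transpose \<Gamma>"] by blast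
  obtain k7 where k7: "k7 > 0" "\<And>x. norm (B *v x) \<le> k7 * norm x" using mat_bound[of "B"] by blast
  obtain k8 where k8: "k8 > 0" "\<And>x. norm (transpose B *v x) \<le> k8 * norm x" using mat_bound[of "transpose B"] by blast
  obtain l1 where l1: "l1 > 0" "\<And>x. l1 * (norm x)^2 \<le> x \<bullet> (L *v x)" using pd_lower[OF Lpd] by blast
  obtain l2 where l2: "l2 > 0" "\<And>x. l2 * (norm x)^2 \<le> x \<bullet> (C *v x)" using pd_lower[OF Cpd] by blast
  obtain l3 where l3: "l3 > 0" "\<And>x. l3 * norm x \<le> norm (L *v x)" using pd_inv[OF Lpd] by blast
  obtain l4 where l4: "l4 > 0" "\<And>x. l4 * norm x \<le> norm (C *v x)" using pd_inv[OF Cpd] by blast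
  define Kb where "Kb = k1 + k2 + k3 + k4 + k5 + k6 + k7 + k8"
  define l where "l = min (min l1 l2) (min l3 l4)"
  have Kb: "Kb > 0" using k1 k2 k3 k4 k5 k6 k7 k8 by (simp add: Kb_def)
  have mono: "\<And>k (x::'z::real_normed_vector) y. norm y \<le> k * norm x \<Longrightarrow> k \<le> Kb \<Longrightarrow> norm y \<le> Kb * norm x"
    by (meson mult_right_mono norm_ge_zero order_trans)
  have lmono: "\<And>l' (z::real). l' * z \<le> w \<Longrightarrow> l \<le> l' \<Longrightarrow> 0 \<le> z \<Longrightarrow> l * z \<le> w" for w
    by (meson mult_right_mono order_trans)
  show ?thesis
  proof (rule that[OF Kb])
    show "l > 0" using l1 l2 l3 l4 by (simp add: l_def)
    show "norm (L *v x) \<le> Kb * norm x" for x by (rule mono[OF k1(2)]) (use k2 k3 k4 k5 k6 k7 k8 in \<open>simp add: Kb_def\<close>)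
    show "norm (R *v x) \<le> Kb * norm x" for x by (rule mono[OF k2(2)]) (use k1 k3 k4 k5 k6 k7 k8 in \<open>simp add: Kb_def\<close>)
    show "norm (C *v x) \<le> Kb * norm x" for x by (rule mono[OF k3(2)]) (use k1 k2 k4 k5 k6 k7 k8 in \<open>simp add: Kb_def\<close>)
    show "norm (G *v x) \<le> Kb * norm x" for x by (rule mono[OF k4(2)]) (use k1 k2 k3 k5 k6 k7 k8 in \<open>simp add: Kb_def\<close>)
    show "norm (\<Gamma> *v x) \<le> Kb * norm x" for x by (rule mono[OF k5(2)]) (use k1 k2 k3 k4 k6 k7 k8 in \<open>simp add: Kb_def\<close>)
    show "norm (transpose \<Gamma> *v x) \<le> Kb * norm x" for x by (rule mono[OF k6(2)]) (use k1 k2 k3 k4 k5 k7 k8 in \<open>simp add: Kb_def\<close>)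
    show "norm (B *v x) \<le> Kb * norm x" for x by (rule mono[OF k7(2)]) (use k1 k2 k3 k4 k5 k6 k8 in \<open>simp add: Kb_def\<close>)
    show "norm (transpose B *v x) \<le> Kb * norm x" for x by (rule mono[OF k8(2)]) (use k1 k2 k3 k4 k5 k6 k7 in \<open>simp add: Kb_def\<close>)
    show "l * (norm x)^2 \<le> x \<bullet> (L *v x)" for x by (rule lmono[OF l1(2)]) (auto simp: l_def)
    show "l * (norm x)^2 \<le> x \<bullet> (C *v x)" for x by (rule lmono[OF l2(2)]) (auto simp: l_def)
    show "l * norm x \<le> norm (L *v x)" for x by (rule lmono[OF l3(2)]) (auto simp: l_def)
    show "l * norm x \<le> norm (C *v x)" for x by (rule lmono[OF l4(2)]) (auto simp: l_def)
  qed
qed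

lemma common:
  obtains m0 M0 K1 K2 where "m0>0" "M0>0" "K1>0" "K2>0"
   "\<And>t. t\<ge>0 \<Longrightarrow> m0 * (norm (Jd t) + norm (Vd t) + norm (u t - ub))^2 \<le> Sf L C ki ub (I t, V t, Jd t, Vd t, u t)
      \<and> Sf L C ki ub (I t, V t, Jd t, Vd t, u t) \<le> M0 * (norm (Jd t) + norm (Vd t) + norm (u t - ub))^2
      \<and> (norm (Jd t) + norm (Vd t) + norm (ctrl_law kd ki ub B 0 (u t) (Jd t)))^2 \<le> K1 * (norm (Jd t) + norm (Vd t) + norm (u t - ub))^2
      \<and> (norm (Jd t) + norm (Vd t) + norm (u t - ub))^2 \<le> K2 * (norm (Jd t) + norm (Vd t) + norm (ctrl_law kd ki ub B 0 (u t) (Jd t)))^2"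
proof -
  obtain Kb l where Kb: "Kb > 0" "l > 0"
    "\<And>x. norm (L *v x) \<le> Kb * norm x" "\<And>x. norm (R *v x) \<le> Kb * norm x"
    "\<And>x. norm (C *v x) \<le> Kb * norm x" "\<And>x. norm (G *v x) \<le> Kb * norm x"
    "\<And>x. norm (\<Gamma> *v x) \<le> Kb * norm x" "\<And>x. norm (transpose \<Gamma> *v x) \<le> Kb * norm x"
    "\<And>x. norm (B *v x) \<le> Kb * norm x" "\<And>x. norm (transpose B *v x) \<le> Kb * norm x"
    "\<And>x. l * (norm x)^2 \<le> x \<bullet> (L *v x)" "\<And>x. l * (norm x)^2 \<le> x \<bullet> (C *v x)"
    "\<And>x. l * norm x \<le> norm (L *v x)" "\<And>x. l * norm x \<le> norm (C *v x)"
    using mat_consts by blast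
  define mu where "mu = min l ki / 2"
  have mu: "mu > 0" using Kb ki by (simp add: mu_def)
  define M where "M = (Kb + ki)/2"
  have M: "M > 0" using Kb ki by (simp add: M_def)
  show ?thesis
  proof (rule that[of "mu/3" M "(1 + (ki+Kb)/kd)^2" "(1 + (kd+Kb)/ki)^2"])
    show "mu/3 > 0" "M > 0" using mu M by auto
    have p1: "0 < (ki+Kb)/kd" "0 < (kd+Kb)/ki" using kd ki Kb by auto
    show "(1 + (ki+Kb)/kd)^2 > 0" "(1 + (kd+Kb)/ki)^2 > 0"
      by (intro zero_less_power, use p1 in linarith)+
    fix t :: real assume t: "t \<ge> 0"
    define x where "x = Jd t"
    define y where "y = Vd t"
    define w where "w = u t - ub"
    define v where "v = ctrl_law kd ki ub B 0 (u t) (Jd t)"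
    define a where "a = norm x"
    define b where "b = norm y"
    define c where "c = norm w"
    define e where "e = norm v"
    have nn: "0 \<le> a" "0 \<le> b" "0 \<le> c" "0 \<le> e" by (auto simp: a_def b_def c_def e_def)
    have S: "Sf L C ki ub (I t, V t, Jd t, Vd t, u t) = (x \<bullet> (L *v x))/2 + (y \<bullet> (C *v y))/2 + ki/2 * c^2"
      by (simp add: Sf_def x_def y_def c_def w_def power2_norm_eq_inner)
    have low: "mu/3 * (a+b+c)^2 \<le> Sf L C ki ub (I t, V t, Jd t, Vd t, u t)"
    proof -
      have "mu/3 * (a+b+c)^2 \<le> mu/3 * (3*(a^2+b^2+c^2))" using mu sq3 by (intro mult_left_mono) auto
      also have "\<dots> = mu*a^2 + mu*b^2 + mu*c^2" by (simp add: algebra_simps)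
      also have "\<dots> \<le> (l*a^2)/2 + (l*b^2)/2 + ki/2*c^2"
      proof -
        have "mu*a^2 \<le> (l/2)*a^2" by (intro mult_right_mono) (auto simp: mu_def)
        moreover have "mu*b^2 \<le> (l/2)*b^2" by (intro mult_right_mono) (auto simp: mu_def)
        moreover have "mu*c^2 \<le> (ki/2)*c^2" by (intro mult_right_mono) (auto simp: mu_def)
        ultimately show ?thesis by simp
      qed
      also have "\<dots> \<le> (x \<bullet> (L *v x))/2 + (y \<bullet> (C *v y))/2 + ki/2 * c^2"
        using Kb(11)[of x] Kb(12)[of y] unfolding a_def b_def by simp
      finally show ?thesis using S by simp
    qed
    have up: "Sf L C ki ub (I t, V t, Jd t, Vd t, u t) \<le> M * (a+b+c)^2"
    proof -
      have "x \<bullet> (L *v x) \<le> Kb * a^2" unfolding a_def by (rule quad_upper[OF Kb(3)])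
      moreover have "y \<bullet> (C *v y) \<le> Kb * b^2" unfolding b_def by (rule quad_upper[OF Kb(5)])
      ultimately have "Sf L C ki ub (I t, V t, Jd t, Vd t, u t) \<le> Kb/2*a^2 + Kb/2*b^2 + ki/2*c^2" using S by simp
      also have "\<dots> \<le> M*a^2 + M*b^2 + M*c^2"
      proof -
        have "Kb/2*a^2 \<le> M*a^2" using ki by (intro mult_right_mono) (auto simp: M_def)
        moreover have "Kb/2*b^2 \<le> M*b^2" using ki by (intro mult_right_mono) (auto simp: M_def)
        moreover have "ki/2*c^2 \<le> M*c^2" using Kb by (intro mult_right_mono) (auto simp: M_def)
        ultimately show ?thesis by simp
      qed
      also have "\<dots> = M*(a^2+b^2+c^2)" by (simp add: algebra_simps)
      also have "\<dots> \<le> M*(a+b+c)^2" using M sq3'[OF nn(1-3)] by (intro mult_left_mono) auto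
      finally show ?thesis .
    qed
    have rel: "ki *\<^sub>R w + transpose B *v x = - (kd *\<^sub>R v)"
      using ctrl_rel[OF kd, of ki "u t" ub B "Jd t" 0] by (simp add: w_def x_def v_def)
    have e1: "kd*e \<le> ki*c + Kb*a"
    proof -
      have "kd*e = norm (ki *\<^sub>R w + transpose B *v x)" using rel kd by (simp add: e_def)
      also have "\<dots> \<le> norm (ki *\<^sub>R w) + norm (transpose B *v x)" by (rule norm_triangle_ineq)
      also have "\<dots> \<le> ki*c + Kb*a" using Kb(10)[of x] ki by (simp add: c_def a_def)
      finally show ?thesis .
    qed
    have e2: "ki*c \<le> kd*e + Kb*a"
    proof -
      have "ki *\<^sub>R w = - (kd *\<^sub>R v) - transpose B *v x" using rel by (simp add: algebra_simps)
      hence "ki*c = norm (- (kd *\<^sub>R v) - transpose B *v x)" using ki by (metis abs_of_pos c_def norm_scaleR)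
      also have "\<dots> \<le> norm (- (kd *\<^sub>R v)) + norm (transpose B *v x)" by (rule norm_triangle_ineq4)
      also have "\<dots> \<le> kd*e + Kb*a" using Kb(10)[of x] kd by (simp add: e_def a_def)
      finally show ?thesis .
    qed
    have K1: "(a+b+e)^2 \<le> (1 + (ki+Kb)/kd)^2 * (a+b+c)^2"
      by (rule sum_bound[OF nn kd ki Kb(1) e1])
    have K2: "(a+b+c)^2 \<le> (1 + (kd+Kb)/ki)^2 * (a+b+e)^2"
      by (rule sum_bound[OF nn(1,2,4,3) ki kd Kb(1) e2])
    show "mu/3 * (norm (Jd t) + norm (Vd t) + norm (u t - ub))^2 \<le> Sf L C ki ub (I t, V t, Jd t, Vd t, u t)
      \<and> Sf L C ki ub (I t, V t, Jd t, Vd t, u t) \<le> M * (norm (Jd t) + norm (Vd t) + norm (u t - ub))^2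
      \<and> (norm (Jd t) + norm (Vd t) + norm (ctrl_law kd ki ub B 0 (u t) (Jd t)))^2 \<le> (1 + (ki+Kb)/kd)^2 * (norm (Jd t) + norm (Vd t) + norm (u t - ub))^2
      \<and> (norm (Jd t) + norm (Vd t) + norm (u t - ub))^2 \<le> (1 + (kd+Kb)/ki)^2 * (norm (Jd t) + norm (Vd t) + norm (ctrl_law kd ki ub B 0 (u t) (Jd t)))^2"
      using low up K1 K2 unfolding a_def b_def c_def e_def x_def y_def w_def v_def by blast
  qed
qed


lemma case2_alg:
  fixes a b e Kb l g DW :: real
  assumes "0\<le>a" "0\<le>b" "0\<le>e" "Kb>0" "l>0"
    and "DW \<le> -g*b^2 + Kb*a*(Kb*b) + Kb*e*(Kb*b) + Kb*a*(Kb*(Kb*(a+b)/l))"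
  shows "DW \<le> -g*b^2 + (Kb^3/l + Kb^2)*(b*(a+e) + (a+e)^2)"
proof -
  have X0: "Kb*a*(Kb*(Kb*(a+b)/l)) = Kb^3/l*(a^2 + a*b)" using assms by (simp add: field_simps power2_eq_square power3_eq_cube)
  have "a^2 + a*b \<le> (a+e)^2 + b*(a+e)" using assms by (simp add: power2_eq_square algebra_simps add_increasing mult_nonneg_nonneg)
  hence X: "Kb*a*(Kb*(Kb*(a+b)/l)) \<le> Kb^3/l*((a+e)^2 + b*(a+e))" unfolding X0 using assms by (intro mult_left_mono) auto
  have Y: "Kb*a*(Kb*b) + Kb*e*(Kb*b) = Kb^2*(b*(a+e))" by (simp add: power2_eq_square algebra_simps)
  have Z: "(Kb^3/l + Kb^2)*(b*(a+e) + (a+e)^2) = Kb^3/l*((a+e)^2 + b*(a+e)) + Kb^2*(b*(a+e)) + Kb^2*(a+e)^2" by (simp add: algebra_simps)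
  have "0 \<le> Kb^2*(a+e)^2" by simp
  thus ?thesis using assms(6) X Y Z by linarith
qed

lemma case2:
  assumes Rpd: "pos_def_mat R" and GamR: "rank \<Gamma> = CARD('r)"
  shows "\<exists>W DW k m d g K. d>0 \<and> g>0 \<and> K>0 \<and> (\<forall>t\<ge>0. (W has_real_derivative DW t) (at t within {0..}) \<and> 0 \<le> k t \<and> 0 \<le> m t
     \<and> k t + m t = norm (Jd t) + norm (Vd t) + norm (vv t) \<and> \<bar>W t\<bar> \<le> K*(m t*k t) \<and> D0 t \<le> -d*(k t)^2
     \<and> DW t \<le> -g*(m t)^2 + K*(m t*k t + (k t)^2))"
proof -
  obtain Kb l where Kb: "Kb > 0" "l > 0"
    "\<And>x. norm (L *v x) \<le> Kb * norm x" "\<And>x. norm (R *v x) \<le> Kb * norm x"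
    "\<And>x. norm (C *v x) \<le> Kb * norm x" "\<And>x. norm (G *v x) \<le> Kb * norm x"
    "\<And>x. norm (\<Gamma> *v x) \<le> Kb * norm x" "\<And>x. norm (transpose \<Gamma> *v x) \<le> Kb * norm x"
    "\<And>x. norm (B *v x) \<le> Kb * norm x" "\<And>x. norm (transpose B *v x) \<le> Kb * norm x"
    "\<And>x. l * (norm x)^2 \<le> x \<bullet> (L *v x)" "\<And>x. l * (norm x)^2 \<le> x \<bullet> (C *v x)"
    "\<And>x. l * norm x \<le> norm (L *v x)" "\<And>x. l * norm x \<le> norm (C *v x)"
    using mat_consts by blast
  obtain r where r: "r > 0" "\<And>x. r * (norm x)^2 \<le> x \<bullet> (R *v x)" using pd_lower[OF Rpd] by blast
  obtain \<gamma> where \<gamma>: "\<gamma> > 0" "\<And>x. \<gamma> * norm x \<le> norm (\<Gamma> *v x)" using inj_below[OF GamR] by blast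
  define K where "K = Kb^3/l + Kb^2"
  have K: "K > 0" using Kb by (simp add: K_def add_pos_pos)
  define d where "d = min r kd / 2"
  have d: "d > 0" using r kd by (simp add: d_def)
  let ?W = "\<lambda>t. (L *v Jd t) \<bullet> (\<Gamma> *v Vd t)"
  let ?DW = "\<lambda>t. (L *v Jd t) \<bullet> (\<Gamma> *v Vdd t) + (L *v Jdd t) \<bullet> (\<Gamma> *v Vd t)"
  let ?k = "\<lambda>t. norm (Jd t) + norm (vv t)"
  let ?m = "\<lambda>t. norm (Vd t)"
  show ?thesis
  proof (intro exI conjI allI impI)
    show "d > 0" "\<gamma>^2 > 0" "K > 0" using d \<gamma> K by auto
    fix t :: real assume t: "0 \<le> t"
    note s = sol[OF t]
    have dJ: "(Jd has_vector_derivative Jdd t) (at t within {0..})" using s by blast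
    have dV: "(Vd has_vector_derivative Vdd t) (at t within {0..})" using s by blast
    have eJ: "- (L *v Jdd t) = \<Gamma> *v Vd t + R *v Jd t - B *v vv t" using s by blast
    have eV: "C *v Vdd t = transpose \<Gamma> *v Jd t - G *v Vd t" using s by blast
    show "(?W has_real_derivative ?DW t) (at t within {0..})"
      using inner_deriv[OF mat_deriv[OF dJ, of L] mat_deriv[OF dV, of \<Gamma>]] by simp
    show "0 \<le> ?k t" "0 \<le> ?m t" by auto
    show "?k t + ?m t = norm (Jd t) + norm (Vd t) + norm (vv t)" by simp
    define a where "a = norm (Jd t)"
    define b where "b = norm (Vd t)"
    define e where "e = norm (vv t)"
    have nn: "0 \<le> a" "0 \<le> b" "0 \<le> e" by (auto simp: a_def b_def e_def)
    have "\<bar>?W t\<bar> \<le> (Kb*a)*(Kb*b)" by (rule ip_bound) (use Kb in \<open>auto simp: a_def b_def\<close>)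
    also have "\<dots> = Kb^2 * (a*b)" by (simp add: power2_eq_square algebra_simps)
    also have "\<dots> \<le> K * (b*(a+e))"
    proof (rule mult_mono)
      show "Kb^2 \<le> K" using Kb by (simp add: K_def)
      show "a*b \<le> b*(a+e)" using nn by (simp add: algebra_simps)
    qed (use K nn in auto)
    finally show "\<bar>?W t\<bar> \<le> K*(?m t*?k t)" by (simp add: a_def b_def e_def)
    have "D0 t \<le> - (r*a^2) - kd*e^2"
    proof -
      have "r*a^2 \<le> Jd t \<bullet> (R *v Jd t)" using r(2) by (simp add: a_def)
      moreover have "0 \<le> Vd t \<bullet> (G *v Vd t)" by (rule psd_nonneg[OF Gpsd])
      moreover have "vv t \<bullet> vv t = e^2" by (simp add: e_def power2_norm_eq_inner)
      ultimately show ?thesis by simp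
    qed
    also have "\<dots> \<le> -(2*d)*(a^2+e^2)"
    proof -
      have "(2*d)*a^2 \<le> r*a^2" by (intro mult_right_mono) (auto simp: d_def)
      moreover have "(2*d)*e^2 \<le> kd*e^2" by (intro mult_right_mono) (auto simp: d_def)
      ultimately show ?thesis by (simp add: algebra_simps)
    qed
    also have "\<dots> \<le> -d*(a+e)^2"
    proof -
      have "(a+e)^2 \<le> 2*(a^2+e^2)"
      proof -
        have "0 \<le> (a-e)^2" by simp
        thus ?thesis by (simp add: power2_eq_square algebra_simps)
      qed
      hence "d*(a+e)^2 \<le> d*(2*(a^2+e^2))" using d by (intro mult_left_mono) auto
      thus ?thesis by (simp add: algebra_simps)
    qed
    finally show "D0 t \<le> -d*(?k t)^2" by (simp add: a_def e_def)
    \<comment> \<open>derivative bound\<close>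
    have Ly': "L *v Jdd t = - (\<Gamma> *v Vd t) - R *v Jd t + B *v vv t"
      using arg_cong[OF eJ, of uminus] by simp
    have t1: "(L *v Jdd t) \<bullet> (\<Gamma> *v Vd t) = - ((\<Gamma> *v Vd t) \<bullet> (\<Gamma> *v Vd t)) - (R *v Jd t) \<bullet> (\<Gamma> *v Vd t) + (B *v vv t) \<bullet> (\<Gamma> *v Vd t)"
      unfolding Ly' by (simp add: inner_diff_left inner_add_left)
    have t2: "\<gamma>^2 * b^2 \<le> (\<Gamma> *v Vd t) \<bullet> (\<Gamma> *v Vd t)"
    proof -
      have "(\<gamma> * b)^2 \<le> (norm (\<Gamma> *v Vd t))^2" using \<gamma> nn by (intro power_mono) (auto simp: b_def)
      thus ?thesis by (simp add: power2_norm_eq_inner power_mult_distrib)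
    qed
    have t3: "\<bar>(R *v Jd t) \<bullet> (\<Gamma> *v Vd t)\<bar> \<le> Kb*a*(Kb*b)" by (rule ip_bound) (use Kb in \<open>auto simp: a_def b_def\<close>)
    have t4: "\<bar>(B *v vv t) \<bullet> (\<Gamma> *v Vd t)\<bar> \<le> Kb*e*(Kb*b)" by (rule ip_bound) (use Kb in \<open>auto simp: e_def b_def\<close>)
    have y': "norm (Vdd t) \<le> Kb*(a+b)/l"
    proof -
      have "l * norm (Vdd t) \<le> norm (C *v Vdd t)" by (rule Kb(14))
      also have "\<dots> \<le> norm (transpose \<Gamma> *v Jd t) + norm (G *v Vd t)" unfolding eV by (rule norm_triangle_ineq4)
      also have "\<dots> \<le> Kb*a + Kb*b" using Kb(6)[of "Vd t"] Kb(8)[of "Jd t"] by (simp add: a_def b_def)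
      finally show ?thesis using Kb by (simp add: field_simps)
    qed
    have t5: "\<bar>(L *v Jd t) \<bullet> (\<Gamma> *v Vdd t)\<bar> \<le> Kb*a*(Kb*(Kb*(a+b)/l))"
    proof (rule ip_bound)
      show "norm (L *v Jd t) \<le> Kb*a" using Kb by (simp add: a_def)
      have "norm (\<Gamma> *v Vdd t) \<le> Kb * norm (Vdd t)" by (rule Kb(7))
      also have "\<dots> \<le> Kb*(Kb*(a+b)/l)" using y' Kb by (intro mult_left_mono) auto
      finally show "norm (\<Gamma> *v Vdd t) \<le> Kb*(Kb*(a+b)/l)" .
    qed
    have "?DW t \<le> - (\<gamma>^2)*b^2 + Kb*a*(Kb*b) + Kb*e*(Kb*b) + Kb*a*(Kb*(Kb*(a+b)/l))"
      using t1 t2 t3 t4 t5 by (simp add: abs_le_iff)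
    hence "?DW t \<le> - (\<gamma>^2)*b^2 + (Kb^3/l + Kb^2)*(b*(a+e) + (a+e)^2)"
      by (rule case2_alg[OF nn Kb(1,2)])
    thus "?DW t \<le> - (\<gamma>^2)*(?m t)^2 + K*(?m t*?k t + (?k t)^2)" by (simp add: K_def a_def b_def e_def)
  qed
qed


lemma case3_alg:
  fixes a b e Kb l g DW :: real
  assumes "0\<le>a" "0\<le>b" "0\<le>e" "Kb>0" "l>0"
    and "DW \<le> -g*a^2 + Kb*b*(Kb*a) + Kb*b*(Kb*(Kb*(b+a+e)/l))"
  shows "DW \<le> -g*a^2 + (Kb^3/l + Kb^2)*(a*(b+e) + (b+e)^2)"
proof -
  have X0: "Kb*b*(Kb*(Kb*(b+a+e)/l)) = Kb^3/l*(a*b + b*(b+e))" using assms by (simp add: field_simps power2_eq_square power3_eq_cube)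
  have "a*b + b*(b+e) \<le> a*(b+e) + (b+e)^2" using assms by (simp add: power2_eq_square algebra_simps add_increasing mult_nonneg_nonneg)
  hence X: "Kb*b*(Kb*(Kb*(b+a+e)/l)) \<le> Kb^3/l*(a*(b+e) + (b+e)^2)" unfolding X0 using assms by (intro mult_left_mono) auto
  have "Kb*b*(Kb*a) = Kb^2*(a*b)" by (simp add: power2_eq_square algebra_simps)
  also have "\<dots> \<le> Kb^2*(a*(b+e))" using assms by (intro mult_left_mono) (auto simp: algebra_simps)
  finally have Y: "Kb*b*(Kb*a) \<le> Kb^2*(a*(b+e))" .
  have Z: "(Kb^3/l + Kb^2)*(a*(b+e) + (b+e)^2) = Kb^3/l*(a*(b+e) + (b+e)^2) + Kb^2*(a*(b+e)) + Kb^2*(b+e)^2" by (simp add: algebra_simps)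
  have "0 \<le> Kb^2*(b+e)^2" by simp
  thus ?thesis using assms(6) X Y Z by linarith
qed

lemma case3:
  assumes Gpd: "pos_def_mat G" and GamR: "rank (transpose \<Gamma>) = CARD('s)"
  shows "\<exists>W DW k m d g K. d>0 \<and> g>0 \<and> K>0 \<and> (\<forall>t\<ge>0. (W has_real_derivative DW t) (at t within {0..}) \<and> 0 \<le> k t \<and> 0 \<le> m t
     \<and> k t + m t = norm (Jd t) + norm (Vd t) + norm (vv t) \<and> \<bar>W t\<bar> \<le> K*(m t*k t) \<and> D0 t \<le> -d*(k t)^2
     \<and> DW t \<le> -g*(m t)^2 + K*(m t*k t + (k t)^2))"
proof -
  obtain Kb l where Kb: "Kb > 0" "l > 0"
    "\<And>x. norm (L *v x) \<le> Kb * norm x" "\<And>x. norm (R *v x) \<le> Kb * norm x"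
    "\<And>x. norm (C *v x) \<le> Kb * norm x" "\<And>x. norm (G *v x) \<le> Kb * norm x"
    "\<And>x. norm (\<Gamma> *v x) \<le> Kb * norm x" "\<And>x. norm (transpose \<Gamma> *v x) \<le> Kb * norm x"
    "\<And>x. norm (B *v x) \<le> Kb * norm x" "\<And>x. norm (transpose B *v x) \<le> Kb * norm x"
    "\<And>x. l * (norm x)^2 \<le> x \<bullet> (L *v x)" "\<And>x. l * (norm x)^2 \<le> x \<bullet> (C *v x)"
    "\<And>x. l * norm x \<le> norm (L *v x)" "\<And>x. l * norm x \<le> norm (C *v x)"
    using mat_consts by blast
  obtain r where r: "r > 0" "\<And>x. r * (norm x)^2 \<le> x \<bullet> (G *v x)" using pd_lower[OF Gpd] by blast
  obtain \<gamma> where \<gamma>: "\<gamma> > 0" "\<And>x. \<gamma> * norm x \<le> norm (transpose \<Gamma> *v x)" using inj_below[OF GamR] by blast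
  define K where "K = Kb^3/l + Kb^2"
  have K: "K > 0" using Kb by (simp add: K_def add_pos_pos)
  define d where "d = min r kd / 2"
  have d: "d > 0" using r kd by (simp add: d_def)
  let ?W = "\<lambda>t. - ((C *v Vd t) \<bullet> (transpose \<Gamma> *v Jd t))"
  let ?DW = "\<lambda>t. - ((C *v Vd t) \<bullet> (transpose \<Gamma> *v Jdd t) + (C *v Vdd t) \<bullet> (transpose \<Gamma> *v Jd t))"
  let ?k = "\<lambda>t. norm (Vd t) + norm (vv t)"
  let ?m = "\<lambda>t. norm (Jd t)"
  show ?thesis
  proof (intro exI conjI allI impI)
    show "d > 0" "\<gamma>^2 > 0" "K > 0" using d \<gamma> K by auto
    fix t :: real assume t: "0 \<le> t"
    note s = sol[OF t]
    have dJ: "(Jd has_vector_derivative Jdd t) (at t within {0..})" using s by blast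
    have dV: "(Vd has_vector_derivative Vdd t) (at t within {0..})" using s by blast
    have eJ: "- (L *v Jdd t) = \<Gamma> *v Vd t + R *v Jd t - B *v vv t" using s by blast
    have eV: "C *v Vdd t = transpose \<Gamma> *v Jd t - G *v Vd t" using s by blast
    show "(?W has_real_derivative ?DW t) (at t within {0..})"
      using DERIV_minus[OF inner_deriv[OF mat_deriv[OF dV, of C] mat_deriv[OF dJ, of "transpose \<Gamma>"]]] by simp
    show "0 \<le> ?k t" "0 \<le> ?m t" by auto
    show "?k t + ?m t = norm (Jd t) + norm (Vd t) + norm (vv t)" by simp
    define a where "a = norm (Jd t)"
    define b where "b = norm (Vd t)"
    define e where "e = norm (vv t)"
    have nn: "0 \<le> a" "0 \<le> b" "0 \<le> e" by (auto simp: a_def b_def e_def)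
    have "\<bar>?W t\<bar> \<le> (Kb*b)*(Kb*a)" unfolding abs_minus_cancel by (rule ip_bound) (use Kb in \<open>auto simp: a_def b_def\<close>)
    also have "\<dots> = Kb^2 * (a*b)" by (simp add: power2_eq_square algebra_simps)
    also have "\<dots> \<le> K * (a*(b+e))"
    proof (rule mult_mono)
      show "Kb^2 \<le> K" using Kb by (simp add: K_def)
      show "a*b \<le> a*(b+e)" using nn by (simp add: algebra_simps)
    qed (use K nn in auto)
    finally show "\<bar>?W t\<bar> \<le> K*(?m t*?k t)" by (simp add: a_def b_def e_def)
    have "D0 t \<le> - (r*b^2) - kd*e^2"
    proof -
      have "r*b^2 \<le> Vd t \<bullet> (G *v Vd t)" using r(2) by (simp add: b_def)
      moreover have "0 \<le> Jd t \<bullet> (R *v Jd t)" by (rule psd_nonneg[OF Rpsd])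
      moreover have "vv t \<bullet> vv t = e^2" by (simp add: e_def power2_norm_eq_inner)
      ultimately show ?thesis by simp
    qed
    also have "\<dots> \<le> -(2*d)*(b^2+e^2)"
    proof -
      have "(2*d)*b^2 \<le> r*b^2" by (intro mult_right_mono) (auto simp: d_def)
      moreover have "(2*d)*e^2 \<le> kd*e^2" by (intro mult_right_mono) (auto simp: d_def)
      ultimately show ?thesis by (simp add: algebra_simps)
    qed
    also have "\<dots> \<le> -d*(b+e)^2"
    proof -
      have "(b+e)^2 \<le> 2*(b^2+e^2)"
      proof -
        have "0 \<le> (b-e)^2" by simp
        thus ?thesis by (simp add: power2_eq_square algebra_simps)
      qed
      hence "d*(b+e)^2 \<le> d*(2*(b^2+e^2))" using d by (intro mult_left_mono) auto
      thus ?thesis by (simp add: algebra_simps)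
    qed
    finally show "D0 t \<le> -d*(?k t)^2" by (simp add: b_def e_def)
    have t1: "(C *v Vdd t) \<bullet> (transpose \<Gamma> *v Jd t) = (transpose \<Gamma> *v Jd t) \<bullet> (transpose \<Gamma> *v Jd t) - (G *v Vd t) \<bullet> (transpose \<Gamma> *v Jd t)"
      unfolding eV by (simp add: inner_diff_left)
    have t2: "\<gamma>^2 * a^2 \<le> (transpose \<Gamma> *v Jd t) \<bullet> (transpose \<Gamma> *v Jd t)"
    proof -
      have "(\<gamma> * a)^2 \<le> (norm (transpose \<Gamma> *v Jd t))^2" using \<gamma> nn by (intro power_mono) (auto simp: a_def)
      thus ?thesis by (simp add: power2_norm_eq_inner power_mult_distrib)
    qed
    have t3: "\<bar>(G *v Vd t) \<bullet> (transpose \<Gamma> *v Jd t)\<bar> \<le> Kb*b*(Kb*a)" by (rule ip_bound) (use Kb in \<open>auto simp: a_def b_def\<close>)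
    have x': "norm (Jdd t) \<le> Kb*(b+a+e)/l"
    proof -
      have "l * norm (Jdd t) \<le> norm (L *v Jdd t)" by (rule Kb(13))
      also have "\<dots> = norm (\<Gamma> *v Vd t + R *v Jd t - B *v vv t)" using arg_cong[OF eJ, of norm] by simp
      also have "\<dots> \<le> norm (\<Gamma> *v Vd t + R *v Jd t) + norm (B *v vv t)" by (rule norm_triangle_ineq4)
      also have "\<dots> \<le> norm (\<Gamma> *v Vd t) + norm (R *v Jd t) + norm (B *v vv t)" using norm_triangle_ineq by simp
      also have "\<dots> \<le> Kb*b + Kb*a + Kb*e" using Kb(7)[of "Vd t"] Kb(4)[of "Jd t"] Kb(9)[of "vv t"] by (simp add: a_def b_def e_def)
      finally show ?thesis using Kb by (simp add: field_simps)
    qed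
    have t5: "\<bar>(C *v Vd t) \<bullet> (transpose \<Gamma> *v Jdd t)\<bar> \<le> Kb*b*(Kb*(Kb*(b+a+e)/l))"
    proof (rule ip_bound)
      show "norm (C *v Vd t) \<le> Kb*b" using Kb by (simp add: b_def)
      have "norm (transpose \<Gamma> *v Jdd t) \<le> Kb * norm (Jdd t)" by (rule Kb(8))
      also have "\<dots> \<le> Kb*(Kb*(b+a+e)/l)" using x' Kb by (intro mult_left_mono) auto
      finally show "norm (transpose \<Gamma> *v Jdd t) \<le> Kb*(Kb*(b+a+e)/l)" .
    qed
    have "?DW t \<le> - (\<gamma>^2)*a^2 + Kb*b*(Kb*a) + Kb*b*(Kb*(Kb*(b+a+e)/l))"
      using t1 t2 t3 t5 by (simp add: abs_le_iff)
    hence "?DW t \<le> - (\<gamma>^2)*a^2 + (Kb^3/l + Kb^2)*(a*(b+e) + (b+e)^2)"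
      by (rule case3_alg[OF nn Kb(1,2)])
    thus "?DW t \<le> - (\<gamma>^2)*(?m t)^2 + K*(?m t*?k t + (?k t)^2)" by (simp add: K_def a_def b_def e_def)
  qed
qed

lemma case1:
  assumes Rpd: "pos_def_mat R" and Gpd: "pos_def_mat G"
  shows "\<exists>W DW k m d g K. d>0 \<and> g>0 \<and> K>0 \<and> (\<forall>t\<ge>0. (W has_real_derivative DW t) (at t within {0..}) \<and> 0 \<le> k t \<and> 0 \<le> m t
     \<and> k t + m t = norm (Jd t) + norm (Vd t) + norm (vv t) \<and> \<bar>W t\<bar> \<le> K*(m t*k t) \<and> D0 t \<le> -d*(k t)^2
     \<and> DW t \<le> -g*(m t)^2 + K*(m t*k t + (k t)^2))"
proof -
  obtain r where r: "r > 0" "\<And>x. r * (norm x)^2 \<le> x \<bullet> (R *v x)" using pd_lower[OF Rpd] by blast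
  obtain q where q: "q > 0" "\<And>x. q * (norm x)^2 \<le> x \<bullet> (G *v x)" using pd_lower[OF Gpd] by blast
  define d where "d = min (min r q) kd / 3"
  have d: "d > 0" using r q kd by (simp add: d_def)
  show ?thesis
  proof (intro exI conjI allI impI)
    show "d > 0" "(1::real) > 0" "(1::real) > 0" using d by auto
    fix t :: real assume t: "0 \<le> t"
    show "((\<lambda>_. 0) has_real_derivative 0) (at t within {0..})" by simp
    show "0 \<le> norm (Jd t) + norm (Vd t) + norm (vv t)" "(0::real) \<le> 0" by auto
    show "norm (Jd t) + norm (Vd t) + norm (vv t) + 0 = norm (Jd t) + norm (Vd t) + norm (vv t)" by simp
    show "\<bar>0::real\<bar> \<le> 1*(0*(norm (Jd t) + norm (Vd t) + norm (vv t)))" by simp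
    show "(0::real) \<le> -1*0^2 + 1*(0*(norm (Jd t) + norm (Vd t) + norm (vv t)) + (norm (Jd t) + norm (Vd t) + norm (vv t))^2)" by simp
    define a where "a = norm (Jd t)"
    define b where "b = norm (Vd t)"
    define e where "e = norm (vv t)"
    have "D0 t \<le> - (r*a^2) - q*b^2 - kd*e^2"
    proof -
      have "r*a^2 \<le> Jd t \<bullet> (R *v Jd t)" using r(2) by (simp add: a_def)
      moreover have "q*b^2 \<le> Vd t \<bullet> (G *v Vd t)" using q(2) by (simp add: b_def)
      moreover have "vv t \<bullet> vv t = e^2" by (simp add: e_def power2_norm_eq_inner)
      ultimately show ?thesis by simp
    qed
    also have "\<dots> \<le> -(3*d)*(a^2+b^2+e^2)"
    proof -
      have "(3*d)*a^2 \<le> r*a^2" by (intro mult_right_mono) (auto simp: d_def)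
      moreover have "(3*d)*b^2 \<le> q*b^2" by (intro mult_right_mono) (auto simp: d_def)
      moreover have "(3*d)*e^2 \<le> kd*e^2" by (intro mult_right_mono) (auto simp: d_def)
      ultimately show ?thesis by (simp add: algebra_simps)
    qed
    also have "\<dots> \<le> -d*(a+b+e)^2"
    proof -
      have "d*(a+b+e)^2 \<le> d*(3*(a^2+b^2+e^2))" using d sq3 by (intro mult_left_mono) auto
      thus ?thesis by (simp add: algebra_simps)
    qed
    finally show "D0 t \<le> -d*(norm (Jd t) + norm (Vd t) + norm (vv t))^2" by (simp add: a_def b_def e_def)
  qed
qed

lemma conv_b:
  assumes cs: "(pos_def_mat R \<and> pos_def_mat G) \<or> (pos_def_mat R \<and> rank \<Gamma> = CARD('r))
        \<or> (pos_def_mat G \<and> rank (transpose \<Gamma>) = CARD('s))"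
  shows "((\<lambda>t. norm (Jd t) + norm (Vd t) + norm (u t - ub)) \<longlongrightarrow> 0) at_top"
proof -
  have "\<exists>W DW k m d g K. d>0 \<and> g>0 \<and> K>0 \<and> (\<forall>t\<ge>0. (W has_real_derivative DW t) (at t within {0..}) \<and> 0 \<le> k t \<and> 0 \<le> m t
     \<and> k t + m t = norm (Jd t) + norm (Vd t) + norm (ctrl_law kd ki ub B 0 (u t) (Jd t)) \<and> \<bar>W t\<bar> \<le> K*(m t*k t)
     \<and> - (Jd t \<bullet> (R *v Jd t)) - Vd t \<bullet> (G *v Vd t) + 0 \<bullet> ctrl_law kd ki ub B 0 (u t) (Jd t) - kd * (ctrl_law kd ki ub B 0 (u t) (Jd t) \<bullet> ctrl_law kd ki ub B 0 (u t) (Jd t)) \<le> -d*(k t)^2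
     \<and> DW t \<le> -g*(m t)^2 + K*(m t*k t + (k t)^2))"
    using cs case1 case2 case3
    by blast
  then obtain W DW k m d g K where P: "d>0" "g>0" "K>0" and Q: "\<And>t. t \<ge> 0 \<Longrightarrow> (W has_real_derivative DW t) (at t within {0..}) \<and> 0 \<le> k t \<and> 0 \<le> m t
     \<and> k t + m t = norm (Jd t) + norm (Vd t) + norm (ctrl_law kd ki ub B 0 (u t) (Jd t)) \<and> \<bar>W t\<bar> \<le> K*(m t*k t)
     \<and> - (Jd t \<bullet> (R *v Jd t)) - Vd t \<bullet> (G *v Vd t) + 0 \<bullet> ctrl_law kd ki ub B 0 (u t) (Jd t) - kd * (ctrl_law kd ki ub B 0 (u t) (Jd t) \<bullet> ctrl_law kd ki ub B 0 (u t) (Jd t)) \<le> -d*(k t)^2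
     \<and> DW t \<le> -g*(m t)^2 + K*(m t*k t + (k t)^2)"
    by blast
  obtain m0 M0 K1 K2 where CP: "m0>0" "M0>0" "K1>0" "K2>0" and CC:
   "\<And>t. t\<ge>0 \<Longrightarrow> m0 * (norm (Jd t) + norm (Vd t) + norm (u t - ub))^2 \<le> Sf L C ki ub (I t, V t, Jd t, Vd t, u t)
      \<and> Sf L C ki ub (I t, V t, Jd t, Vd t, u t) \<le> M0 * (norm (Jd t) + norm (Vd t) + norm (u t - ub))^2
      \<and> (norm (Jd t) + norm (Vd t) + norm (ctrl_law kd ki ub B 0 (u t) (Jd t)))^2 \<le> K1 * (norm (Jd t) + norm (Vd t) + norm (u t - ub))^2
      \<and> (norm (Jd t) + norm (Vd t) + norm (u t - ub))^2 \<le> K2 * (norm (Jd t) + norm (Vd t) + norm (ctrl_law kd ki ub B 0 (u t) (Jd t)))^2"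
    using common by blast
  have symL: "transpose L = L" and symC: "transpose C = C" using Lpd Cpd by (auto simp: pos_def_mat_def)
  define Z where "Z t = (norm (Jd t) + norm (Vd t) + norm (u t - ub))^2" for t
  have "(Z \<longlongrightarrow> 0) at_top"
  proof (rule core_conv[of d g K K1 K2 m0 M0 "\<lambda>t. Sf L C ki ub (I t, V t, Jd t, Vd t, u t)"
      "\<lambda>t. - (Jd t \<bullet> (R *v Jd t)) - Vd t \<bullet> (G *v Vd t) + 0 \<bullet> ctrl_law kd ki ub B 0 (u t) (Jd t) - kd * (ctrl_law kd ki ub B 0 (u t) (Jd t) \<bullet> ctrl_law kd ki ub B 0 (u t) (Jd t))"
      W DW k m Z])
    show "d>0" "g>0" "K>0" "K1>0" "K2>0" "m0>0" "M0>0" using P CP by auto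
    fix t :: real assume t: "t \<ge> 0"
    note s = sol[OF t]
    show "((\<lambda>t. Sf L C ki ub (I t, V t, Jd t, Vd t, u t)) has_real_derivative
      - (Jd t \<bullet> (R *v Jd t)) - Vd t \<bullet> (G *v Vd t) + 0 \<bullet> ctrl_law kd ki ub B 0 (u t) (Jd t) - kd * (ctrl_law kd ki ub B 0 (u t) (Jd t) \<bullet> ctrl_law kd ki ub B 0 (u t) (Jd t)))
      (at t within {0..})"
      by (rule S_deriv[OF symL symC kd]) (use s in auto)
    show "(W has_real_derivative DW t) (at t within {0..})" using Q[OF t] by blast
    show "0 \<le> k t \<and> 0 \<le> m t \<and> m0 * Z t \<le> Sf L C ki ub (I t, V t, Jd t, Vd t, u t) \<and> Sf L C ki ub (I t, V t, Jd t, Vd t, u t) \<le> M0 * Z t \<and>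
      \<bar>W t\<bar> \<le> K * (m t * k t) \<and>
      - (Jd t \<bullet> (R *v Jd t)) - Vd t \<bullet> (G *v Vd t) + 0 \<bullet> ctrl_law kd ki ub B 0 (u t) (Jd t) - kd * (ctrl_law kd ki ub B 0 (u t) (Jd t) \<bullet> ctrl_law kd ki ub B 0 (u t) (Jd t)) \<le> - d * (k t)\<^sup>2 \<and>
      DW t \<le> - g * (m t)\<^sup>2 + K * (m t * k t + (k t)\<^sup>2) \<and> (k t + m t)\<^sup>2 \<le> K1 * Z t \<and> Z t \<le> K2 * (k t + m t)\<^sup>2"
      using Q[OF t] CC[OF t] unfolding Z_def by simp
  qed
  hence "((\<lambda>t. sqrt (Z t)) \<longlongrightarrow> sqrt 0) at_top" by (rule tendsto_real_sqrt)
  moreover have "sqrt (Z t) = norm (Jd t) + norm (Vd t) + norm (u t - ub)" for t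
    unfolding Z_def by (simp add: real_sqrt_abs)
  ultimately show ?thesis by simp
qed

end

lemma dist_tuple_le:
  fixes a1 :: "'a::real_normed_vector" and a2 :: "'b::real_normed_vector" and x :: "'c::real_normed_vector"
    and y :: "'d::real_normed_vector" and w w0 :: "'e::real_normed_vector"
  shows "dist (a1, a2, x, y, w) (a1, a2, 0, 0, w0) \<le> norm x + norm y + norm (w - w0)"
proof -
  have "dist (a1, a2, x, y, w) (a1, a2, 0, 0, w0) = norm ((0::'a), (0::'b), x, y, w - w0)"
    by (simp add: dist_norm)
  also have "\<dots> \<le> norm (0::'a) + norm ((0::'b), x, y, w - w0)" by (rule norm_Pair_le)
  also have "norm ((0::'b), x, y, w - w0) \<le> norm (0::'b) + norm (x, y, w - w0)" by (rule norm_Pair_le)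
  also have "norm (x, y, w - w0) \<le> norm x + norm (y, w - w0)" by (rule norm_Pair_le)
  also have "norm (y, w - w0) \<le> norm y + norm (w - w0)" by (rule norm_Pair_le)
  finally show ?thesis by simp
qed

lemma partA:
  fixes L :: "real^'s^'s" and R :: "real^'s^'s"
    and C :: "real^'r^'r" and G :: "real^'r^'r"
    and \<Gamma> :: "real^'r^'s" and B :: "real^'m^'s"
    and ub :: "real^'m"
    and kd ki :: real
  assumes L: "pos_def_mat L" and C: "pos_def_mat C"
    and R: "psd_mat R" and G: "psd_mat G"
    and kd: "kd > 0" and ki: "ki > 0"
  shows
    "(\<exists>S :: (real^'s) \<times> (real^'r) \<times> (real^'s) \<times> (real^'r) \<times> (real^'m) \<Rightarrow> real.
        (\<forall>x. 0 \<le> S x) \<and>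
        (\<forall>mu I V Jd Vd u. closed_loop_sol L C R G \<Gamma> B kd ki ub mu I V Jd Vd u \<longrightarrow>
           (\<forall>t\<ge>0. \<exists>D. ((\<lambda>\<tau>. S (I \<tau>, V \<tau>, Jd \<tau>, Vd \<tau>, u \<tau>)) has_real_derivative D) (at t within {0..})
                     \<and> D \<le> mu t \<bullet> ctrl_law kd ki ub B (mu t) (u t) (Jd t))))"
proof (intro exI[of _ "Sf L C ki ub"] conjI allI impI)
  fix z :: "(real^'s) \<times> (real^'r) \<times> (real^'s) \<times> (real^'r) \<times> (real^'m)"
  obtain I V x y w where z: "z = (I, V, x, y, w)" by (cases z) auto
  have "0 \<le> x \<bullet> (L *v x)" by (rule pd_nonneg[OF L])
  moreover have "0 \<le> y \<bullet> (C *v y)" by (rule pd_nonneg[OF C])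
  moreover have "0 \<le> ki/2 * ((w-ub) \<bullet> (w-ub))" using ki by simp
  ultimately show "0 \<le> Sf L C ki ub z" unfolding z Sf_def by simp
next
  fix mu I V Jd Vd u and t :: real
  assume sol: "closed_loop_sol L C R G \<Gamma> B kd ki ub mu I V Jd Vd u" and t: "0 \<le> t"
  obtain Jdd Vdd where s: "\<forall>t\<ge>0.
       (I has_vector_derivative Jd t) (at t within {0..}) \<and>
       (V has_vector_derivative Vd t) (at t within {0..}) \<and>
       (Jd has_vector_derivative Jdd t) (at t within {0..}) \<and>
       (Vd has_vector_derivative Vdd t) (at t within {0..}) \<and>
       (u has_vector_derivative ctrl_law kd ki ub B (mu t) (u t) (Jd t)) (at t within {0..}) \<and>
       - (L *v Jd t) = \<Gamma> *v V t + R *v I t - B *v u t \<and>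
       C *v Vd t = transpose \<Gamma> *v I t - G *v V t \<and>
       - (L *v Jdd t) = \<Gamma> *v Vd t + R *v Jd t - B *v ctrl_law kd ki ub B (mu t) (u t) (Jd t) \<and>
       C *v Vdd t = transpose \<Gamma> *v Jd t - G *v Vd t"
    using sol unfolding closed_loop_sol_def by blast
  have symL: "transpose L = L" and symC: "transpose C = C" using L C by (auto simp: pos_def_mat_def)
  let ?v = "ctrl_law kd ki ub B (mu t) (u t) (Jd t)"
  have d: "((\<lambda>\<tau>. Sf L C ki ub (I \<tau>, V \<tau>, Jd \<tau>, Vd \<tau>, u \<tau>)) has_real_derivative
      (- (Jd t \<bullet> (R *v Jd t)) - Vd t \<bullet> (G *v Vd t) + mu t \<bullet> ?v - kd * (?v \<bullet> ?v))) (at t within {0..})"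
    by (rule S_deriv[OF symL symC kd]) (use s t in auto)
  have "- (Jd t \<bullet> (R *v Jd t)) - Vd t \<bullet> (G *v Vd t) + mu t \<bullet> ?v - kd * (?v \<bullet> ?v) \<le> mu t \<bullet> ?v"
  proof -
    have "0 \<le> Jd t \<bullet> (R *v Jd t)" by (rule psd_nonneg[OF R])
    moreover have "0 \<le> Vd t \<bullet> (G *v Vd t)" by (rule psd_nonneg[OF G])
    moreover have "0 \<le> kd * (?v \<bullet> ?v)" using kd by simp
    ultimately show ?thesis by linarith
  qed
  with d show "\<exists>D. ((\<lambda>\<tau>. Sf L C ki ub (I \<tau>, V \<tau>, Jd \<tau>, Vd \<tau>, u \<tau>)) has_real_derivative D) (at t within {0..})
                     \<and> D \<le> mu t \<bullet> ctrl_law kd ki ub B (mu t) (u t) (Jd t)" by blast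
qed

lemma sol0:
  assumes "closed_loop_sol L C R G \<Gamma> B kd ki ub (\<lambda>_. 0) I V Jd Vd u"
  obtains Jdd Vdd where "\<And>t. t \<ge> 0 \<Longrightarrow>
       (I has_vector_derivative Jd t) (at t within {0..}) \<and>
       (V has_vector_derivative Vd t) (at t within {0..}) \<and>
       (Jd has_vector_derivative Jdd t) (at t within {0..}) \<and>
       (Vd has_vector_derivative Vdd t) (at t within {0..}) \<and>
       (u has_vector_derivative ctrl_law kd ki ub B 0 (u t) (Jd t)) (at t within {0..}) \<and>
       - (L *v Jd t) = \<Gamma> *v V t + R *v I t - B *v u t \<and>
       C *v Vd t = transpose \<Gamma> *v I t - G *v V t \<and>
       - (L *v Jdd t) = \<Gamma> *v Vd t + R *v Jd t - B *v ctrl_law kd ki ub B 0 (u t) (Jd t) \<and>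
       C *v Vdd t = transpose \<Gamma> *v Jd t - G *v Vd t"
  using assms unfolding closed_loop_sol_def by blast

lemma partB:
  fixes L :: "real^'s^'s" and R :: "real^'s^'s"
    and C :: "real^'r^'r" and G :: "real^'r^'r"
    and \<Gamma> :: "real^'r^'s" and B :: "real^'m^'s"
    and ub :: "real^'m"
    and kd ki :: real
  assumes L: "pos_def_mat L" and C: "pos_def_mat C"
    and R: "psd_mat R" and G: "psd_mat G"
    and kd: "kd > 0" and ki: "ki > 0"
  shows
     "((pos_def_mat R \<and> pos_def_mat G) \<or> (pos_def_mat R \<and> rank \<Gamma> = CARD('r))
        \<or> (pos_def_mat G \<and> rank (transpose \<Gamma>) = CARD('s)) \<longrightarrow>
      (\<forall>I V Jd Vd u. closed_loop_sol L C R G \<Gamma> B kd ki ub (\<lambda>_. 0) I V Jd Vd u \<longrightarrow>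
         ((\<lambda>t. infdist (I t, V t, Jd t, Vd t, u t)
              {(I', V', Jd', Vd', u'). Vd' = 0 \<and> Jd' = 0 \<and> ctrl_law kd ki ub B 0 u' Jd' = 0 \<and> u' = ub})
          \<longlongrightarrow> 0) at_top))"
proof (intro impI allI)
  fix I V Jd Vd u
  assume cs: "(pos_def_mat R \<and> pos_def_mat G) \<or> (pos_def_mat R \<and> rank \<Gamma> = CARD('r))
        \<or> (pos_def_mat G \<and> rank (transpose \<Gamma>) = CARD('s))"
    and sol: "closed_loop_sol L C R G \<Gamma> B kd ki ub (\<lambda>_. 0) I V Jd Vd u"
  obtain Jdd Vdd where s0: "\<forall>t\<ge>0.
       (I has_vector_derivative Jd t) (at t within {0..}) \<and>
       (V has_vector_derivative Vd t) (at t within {0..}) \<and>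
       (Jd has_vector_derivative Jdd t) (at t within {0..}) \<and>
       (Vd has_vector_derivative Vdd t) (at t within {0..}) \<and>
       (u has_vector_derivative ctrl_law kd ki ub B 0 (u t) (Jd t)) (at t within {0..}) \<and>
       - (L *v Jd t) = \<Gamma> *v V t + R *v I t - B *v u t \<and>
       C *v Vd t = transpose \<Gamma> *v I t - G *v V t \<and>
       - (L *v Jdd t) = \<Gamma> *v Vd t + R *v Jd t - B *v ctrl_law kd ki ub B 0 (u t) (Jd t) \<and>
       C *v Vdd t = transpose \<Gamma> *v Jd t - G *v Vd t"
        using sol unfolding closed_loop_sol_def by blast
  have s: "\<And>t. t \<ge> 0 \<Longrightarrow>
       (I has_vector_derivative Jd t) (at t within {0..}) \<and>
       (V has_vector_derivative Vd t) (at t within {0..}) \<and>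
       (Jd has_vector_derivative Jdd t) (at t within {0..}) \<and>
       (Vd has_vector_derivative Vdd t) (at t within {0..}) \<and>
       (u has_vector_derivative ctrl_law kd ki ub B 0 (u t) (Jd t)) (at t within {0..}) \<and>
       - (L *v Jd t) = \<Gamma> *v V t + R *v I t - B *v u t \<and>
       C *v Vd t = transpose \<Gamma> *v I t - G *v V t \<and>
       - (L *v Jdd t) = \<Gamma> *v Vd t + R *v Jd t - B *v ctrl_law kd ki ub B 0 (u t) (Jd t) \<and>
       C *v Vdd t = transpose \<Gamma> *v Jd t - G *v Vd t"
        using s0 by blast
  have lim: "((\<lambda>t. norm (Jd t) + norm (Vd t) + norm (u t - ub)) \<longlongrightarrow> 0) at_top"
    by (rule conv_b[OF L C R G kd ki s cs])
  let ?S = "{(I', V', Jd', Vd', u'). Vd' = 0 \<and> Jd' = 0 \<and> ctrl_law kd ki ub B 0 u' Jd' = 0 \<and> u' = ub}"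
  have le: "infdist (I t, V t, Jd t, Vd t, u t) ?S \<le> norm (Jd t) + norm (Vd t) + norm (u t - ub)" for t
  proof -
    have "(I t, V t, 0, 0, ub) \<in> ?S" by (simp add: ctrl_law_def)
    hence "infdist (I t, V t, Jd t, Vd t, u t) ?S \<le> dist (I t, V t, Jd t, Vd t, u t) (I t, V t, 0, 0, ub)"
      by (rule infdist_le)
    also have "\<dots> \<le> norm (Jd t) + norm (Vd t) + norm (u t - ub)" by (rule dist_tuple_le)
    finally show ?thesis .
  qed
  show "((\<lambda>t. infdist (I t, V t, Jd t, Vd t, u t) ?S) \<longlongrightarrow> 0) at_top"
    by (rule tendsto_sandwich[OF _ _ tendsto_const lim]) (auto intro: always_eventually infdist_nonneg le)
qed

lemma alg1:
  fixes L R :: "real^'s^'s" and \<Gamma> :: "real^'r^'s" and B :: "real^'m^'s"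
  assumes h: "- (L *v x) = \<Gamma> *v V + R *v I - B *v u" and e: "0 = \<Gamma> *v Vs + R *v Ib - B *v ub"
  shows "R *v (I - Ib) + \<Gamma> *v (V - Vs) = B *v (u - ub) - L *v x"
proof -
  have a: "\<Gamma> *v V + R *v I - B *v u + L *v x = 0" by (simp add: h[symmetric])
  have "R *v (I - Ib) + \<Gamma> *v (V - Vs) - (B *v (u - ub) - L *v x)
      = (\<Gamma> *v V + R *v I - B *v u + L *v x) - (\<Gamma> *v Vs + R *v Ib - B *v ub)"
    by (simp add: matrix_vector_mult_diff_distrib algebra_simps)
  also have "\<dots> = 0" using a e by simp
  finally show ?thesis by simp
qed

lemma alg2:
  fixes C G :: "real^'r^'r" and \<Gamma> :: "real^'r^'s"
  assumes h: "C *v y = transpose \<Gamma> *v I - G *v V" and e: "0 = transpose \<Gamma> *v Ib - G *v Vs"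
  shows "transpose \<Gamma> *v (I - Ib) - G *v (V - Vs) = C *v y"
proof -
  have "transpose \<Gamma> *v (I - Ib) - G *v (V - Vs) - C *v y
      = (transpose \<Gamma> *v I - G *v V - C *v y) - (transpose \<Gamma> *v Ib - G *v Vs)"
    by (simp add: matrix_vector_mult_diff_distrib algebra_simps)
  also have "\<dots> = 0" using h e by simp
  finally show ?thesis by simp
qed

lemma at1_nonbot: "at (1::real) within {0..} \<noteq> bot"
proof -
  have "at (1::real) within {0..} = at 1" by (rule at_within_interior) simp
  thus ?thesis using trivial_limit_at[of "1::real"] by (simp add: trivial_limit_def)
qed

lemma partC:
  fixes L :: "real^'s^'s" and R :: "real^'s^'s"
    and C :: "real^'r^'r" and G :: "real^'r^'r"
    and \<Gamma> :: "real^'r^'s" and B :: "real^'m^'s"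
    and Vstar :: "real^'r" and ub :: "real^'m" and Ib :: "real^'s"
    and kd ki :: real
  assumes L: "pos_def_mat L" and C: "pos_def_mat C"
    and R: "psd_mat R" and G: "psd_mat G"
    and eq1: "0 = \<Gamma> *v Vstar + R *v Ib - B *v ub"
    and eq2: "0 = transpose \<Gamma> *v Ib - G *v Vstar"
    and kd: "kd > 0" and ki: "ki > 0"
  shows
     "(((pos_def_mat R \<and> pos_def_mat G) \<or> (pos_def_mat R \<and> rank \<Gamma> = CARD('r))
        \<or> (pos_def_mat G \<and> rank (transpose \<Gamma>) = CARD('s)))
       \<and> rank (block_As R \<Gamma> G) = CARD('s + 'r) \<longrightarrow>
      (\<forall>I V Jd Vd u. closed_loop_sol L C R G \<Gamma> B kd ki ub (\<lambda>_. 0) I V Jd Vd u \<longrightarrow>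
         ((\<lambda>t. (I t, V t, Jd t, Vd t, u t)) \<longlongrightarrow> (Ib, Vstar, 0, 0, ub)) at_top)
      \<and> closed_loop_sol L C R G \<Gamma> B kd ki ub (\<lambda>_. 0) (\<lambda>_. Ib) (\<lambda>_. Vstar) (\<lambda>_. 0) (\<lambda>_. 0) (\<lambda>_. ub)
      \<and> (\<forall>I0 V0 Jd0 Vd0 u0.
           closed_loop_sol L C R G \<Gamma> B kd ki ub (\<lambda>_. 0) (\<lambda>_. I0) (\<lambda>_. V0) (\<lambda>_. Jd0) (\<lambda>_. Vd0) (\<lambda>_. u0)
           \<longrightarrow> (I0, V0, Jd0, Vd0, u0) = (Ib, Vstar, 0, 0, ub)))"
proof (intro impI)
  assume H: "((pos_def_mat R \<and> pos_def_mat G) \<or> (pos_def_mat R \<and> rank \<Gamma> = CARD('r))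
        \<or> (pos_def_mat G \<and> rank (transpose \<Gamma>) = CARD('s)))
       \<and> rank (block_As R \<Gamma> G) = CARD('s + 'r)"
  hence cs: "(pos_def_mat R \<and> pos_def_mat G) \<or> (pos_def_mat R \<and> rank \<Gamma> = CARD('r))
        \<or> (pos_def_mat G \<and> rank (transpose \<Gamma>) = CARD('s))" and rk: "rank (block_As R \<Gamma> G) = CARD('s + 'r)"
    by auto
  have P1: "\<forall>I V Jd Vd u. closed_loop_sol L C R G \<Gamma> B kd ki ub (\<lambda>_. 0) I V Jd Vd u \<longrightarrow>
         ((\<lambda>t. (I t, V t, Jd t, Vd t, u t)) \<longlongrightarrow> (Ib, Vstar, 0, 0, ub)) at_top"
  proof (intro allI impI)
    fix I V Jd Vd u
    assume sol: "closed_loop_sol L C R G \<Gamma> B kd ki ub (\<lambda>_. 0) I V Jd Vd u"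
    obtain Jdd Vdd where s0: "\<forall>t\<ge>0.
       (I has_vector_derivative Jd t) (at t within {0..}) \<and>
       (V has_vector_derivative Vd t) (at t within {0..}) \<and>
       (Jd has_vector_derivative Jdd t) (at t within {0..}) \<and>
       (Vd has_vector_derivative Vdd t) (at t within {0..}) \<and>
       (u has_vector_derivative ctrl_law kd ki ub B 0 (u t) (Jd t)) (at t within {0..}) \<and>
       - (L *v Jd t) = \<Gamma> *v V t + R *v I t - B *v u t \<and>
       C *v Vd t = transpose \<Gamma> *v I t - G *v V t \<and>
       - (L *v Jdd t) = \<Gamma> *v Vd t + R *v Jd t - B *v ctrl_law kd ki ub B 0 (u t) (Jd t) \<and>
       C *v Vdd t = transpose \<Gamma> *v Jd t - G *v Vd t"
      using sol unfolding closed_loop_sol_def by blast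
    have s: "\<And>t. t \<ge> 0 \<Longrightarrow>
       (I has_vector_derivative Jd t) (at t within {0..}) \<and>
       (V has_vector_derivative Vd t) (at t within {0..}) \<and>
       (Jd has_vector_derivative Jdd t) (at t within {0..}) \<and>
       (Vd has_vector_derivative Vdd t) (at t within {0..}) \<and>
       (u has_vector_derivative ctrl_law kd ki ub B 0 (u t) (Jd t)) (at t within {0..}) \<and>
       - (L *v Jd t) = \<Gamma> *v V t + R *v I t - B *v u t \<and>
       C *v Vd t = transpose \<Gamma> *v I t - G *v V t \<and>
       - (L *v Jdd t) = \<Gamma> *v Vd t + R *v Jd t - B *v ctrl_law kd ki ub B 0 (u t) (Jd t) \<and>
       C *v Vdd t = transpose \<Gamma> *v Jd t - G *v Vd t"
      using s0 by blast
    have lim: "((\<lambda>t. norm (Jd t) + norm (Vd t) + norm (u t - ub)) \<longlongrightarrow> 0) at_top"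
      by (rule conv_b[OF L C R G kd ki s cs])
    have J0: "(Jd \<longlongrightarrow> 0) at_top"
      by (rule Lim_null_comparison[OF _ lim]) (intro always_eventually allI, simp)
    have V0: "(Vd \<longlongrightarrow> 0) at_top"
      by (rule Lim_null_comparison[OF _ lim]) (intro always_eventually allI, simp)
    have U0: "((\<lambda>t. u t - ub) \<longlongrightarrow> 0) at_top"
      by (rule Lim_null_comparison[OF _ lim]) (intro always_eventually allI, simp)
    have U: "(u \<longlongrightarrow> ub) at_top" using tendsto_add[OF U0 tendsto_const[of ub]] by simp
    have l1: "((\<lambda>t. R *v (I t - Ib) + \<Gamma> *v (V t - Vstar)) \<longlongrightarrow> 0) at_top"
    proof (rule Lim_transform_eventually)
      have "((\<lambda>t. B *v (u t - ub) - L *v Jd t) \<longlongrightarrow> B *v 0 - L *v 0) at_top"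
        by (intro tendsto_diff bounded_linear.tendsto[OF matrix_vector_mul_bounded_linear] U0 J0)
      thus "((\<lambda>t. B *v (u t - ub) - L *v Jd t) \<longlongrightarrow> 0) at_top" by simp
      show "\<forall>\<^sub>F t in at_top. B *v (u t - ub) - L *v Jd t = R *v (I t - Ib) + \<Gamma> *v (V t - Vstar)"
        unfolding eventually_at_top_linorder
      proof (intro exI[of _ 0] allI impI)
        fix t :: real assume "t \<ge> 0"
        hence h: "- (L *v Jd t) = \<Gamma> *v V t + R *v I t - B *v u t" using s by blast
        show "B *v (u t - ub) - L *v Jd t = R *v (I t - Ib) + \<Gamma> *v (V t - Vstar)" by (rule alg1[OF h eq1, symmetric])
      qed
    qed
    have l2: "((\<lambda>t. transpose \<Gamma> *v (I t - Ib) - G *v (V t - Vstar)) \<longlongrightarrow> 0) at_top"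
    proof (rule Lim_transform_eventually)
      have "((\<lambda>t. C *v Vd t) \<longlongrightarrow> C *v 0) at_top"
        by (intro bounded_linear.tendsto[OF matrix_vector_mul_bounded_linear] V0)
      thus "((\<lambda>t. C *v Vd t) \<longlongrightarrow> 0) at_top" by simp
      show "\<forall>\<^sub>F t in at_top. C *v Vd t = transpose \<Gamma> *v (I t - Ib) - G *v (V t - Vstar)"
        unfolding eventually_at_top_linorder
      proof (intro exI[of _ 0] allI impI)
        fix t :: real assume "t \<ge> 0"
        hence h: "C *v Vd t = transpose \<Gamma> *v I t - G *v V t" using s by blast
        show "C *v Vd t = transpose \<Gamma> *v (I t - Ib) - G *v (V t - Vstar)" by (rule alg2[OF h eq2, symmetric])
      qed
    qed
    from blk_conv[OF rk l1 l2] have pq: "((\<lambda>t. I t - Ib) \<longlongrightarrow> 0) at_top" "((\<lambda>t. V t - Vstar) \<longlongrightarrow> 0) at_top"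
      by auto
    have I: "(I \<longlongrightarrow> Ib) at_top" using tendsto_add[OF pq(1) tendsto_const[of Ib]] by simp
    have V: "(V \<longlongrightarrow> Vstar) at_top" using tendsto_add[OF pq(2) tendsto_const[of Vstar]] by simp
    show "((\<lambda>t. (I t, V t, Jd t, Vd t, u t)) \<longlongrightarrow> (Ib, Vstar, 0, 0, ub)) at_top"
      by (intro tendsto_Pair I V J0 V0 U)
  qed
  have P2: "closed_loop_sol L C R G \<Gamma> B kd ki ub (\<lambda>_. 0) (\<lambda>_. Ib) (\<lambda>_. Vstar) (\<lambda>_. 0) (\<lambda>_. 0) (\<lambda>_. ub)"
  proof -
    have e2: "transpose \<Gamma> *v Ib = G *v Vstar" using eq2 by (metis eq_iff_diff_eq_0)
    hence e2': "Ib v* \<Gamma> = G *v Vstar" by simp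
    show ?thesis unfolding closed_loop_sol_def
      by (intro exI[of _ "\<lambda>_. 0"] allI impI conjI) (simp_all add: ctrl_law_def eq1[symmetric] e2 e2')
  qed
  have P3: "\<forall>I0 V0 Jd0 Vd0 u0.
           closed_loop_sol L C R G \<Gamma> B kd ki ub (\<lambda>_. 0) (\<lambda>_. I0) (\<lambda>_. V0) (\<lambda>_. Jd0) (\<lambda>_. Vd0) (\<lambda>_. u0)
           \<longrightarrow> (I0, V0, Jd0, Vd0, u0) = (Ib, Vstar, 0, 0, ub)"
  proof (intro allI impI)
    fix I0 V0 Jd0 Vd0 u0
    assume sol: "closed_loop_sol L C R G \<Gamma> B kd ki ub (\<lambda>_. 0) (\<lambda>_. I0) (\<lambda>_. V0) (\<lambda>_. Jd0) (\<lambda>_. Vd0) (\<lambda>_. u0)"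
    then obtain Jdd Vdd where s0: "\<forall>t\<ge>0.
       ((\<lambda>_. I0) has_vector_derivative Jd0) (at t within {0..}) \<and>
       ((\<lambda>_. V0) has_vector_derivative Vd0) (at t within {0..}) \<and>
       ((\<lambda>_. u0) has_vector_derivative ctrl_law kd ki ub B 0 u0 Jd0) (at t within {0..}) \<and>
       - (L *v Jd0) = \<Gamma> *v V0 + R *v I0 - B *v u0 \<and>
       C *v Vd0 = transpose \<Gamma> *v I0 - G *v V0"
      unfolding closed_loop_sol_def by blast
    have s1: "((\<lambda>_. I0) has_vector_derivative Jd0) (at 1 within {0..})"
      "((\<lambda>_. V0) has_vector_derivative Vd0) (at 1 within {0..})"
      "((\<lambda>_. u0) has_vector_derivative ctrl_law kd ki ub B 0 u0 Jd0) (at 1 within {0..})"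
      "- (L *v Jd0) = \<Gamma> *v V0 + R *v I0 - B *v u0"
      "C *v Vd0 = transpose \<Gamma> *v I0 - G *v V0"
      using s0 by auto
    have J: "Jd0 = 0" by (rule vector_derivative_unique_within[OF at1_nonbot s1(1) has_vector_derivative_const])
    have Vv: "Vd0 = 0" by (rule vector_derivative_unique_within[OF at1_nonbot s1(2) has_vector_derivative_const])
    have cz: "ctrl_law kd ki ub B 0 u0 Jd0 = 0"
      by (rule vector_derivative_unique_within[OF at1_nonbot s1(3) has_vector_derivative_const])
    have "ki *\<^sub>R (u0 - ub) = 0" using cz kd unfolding J by (simp add: ctrl_law_def)
    hence U: "u0 = ub" using ki by simp
    have h1: "- (L *v 0) = \<Gamma> *v V0 + R *v I0 - B *v ub" using s1(4) J U by simp
    have h2: "C *v 0 = transpose \<Gamma> *v I0 - G *v V0" using s1(5) Vv by simp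
    have "R *v (I0 - Ib) + \<Gamma> *v (V0 - Vstar) = B *v (ub - ub) - L *v 0" by (rule alg1[OF h1 eq1])
    hence a: "R *v (I0 - Ib) + \<Gamma> *v (V0 - Vstar) = 0" by simp
    have "transpose \<Gamma> *v (I0 - Ib) - G *v (V0 - Vstar) = C *v 0" by (rule alg2[OF h2 eq2])
    hence b: "transpose \<Gamma> *v (I0 - Ib) - G *v (V0 - Vstar) = 0" by simp
    have "I0 - Ib = 0 \<and> V0 - Vstar = 0" by (rule blk_inj[OF rk a b])
    thus "(I0, V0, Jd0, Vd0, u0) = (Ib, Vstar, 0, 0, ub)" using J Vv U by simp
  qed
  show "(\<forall>I V Jd Vd u. closed_loop_sol L C R G \<Gamma> B kd ki ub (\<lambda>_. 0) I V Jd Vd u \<longrightarrow>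
         ((\<lambda>t. (I t, V t, Jd t, Vd t, u t)) \<longlongrightarrow> (Ib, Vstar, 0, 0, ub)) at_top)
      \<and> closed_loop_sol L C R G \<Gamma> B kd ki ub (\<lambda>_. 0) (\<lambda>_. Ib) (\<lambda>_. Vstar) (\<lambda>_. 0) (\<lambda>_. 0) (\<lambda>_. ub)
      \<and> (\<forall>I0 V0 Jd0 Vd0 u0.
           closed_loop_sol L C R G \<Gamma> B kd ki ub (\<lambda>_. 0) (\<lambda>_. I0) (\<lambda>_. V0) (\<lambda>_. Jd0) (\<lambda>_. Vd0) (\<lambda>_. u0)
           \<longrightarrow> (I0, V0, Jd0, Vd0, u0) = (Ib, Vstar, 0, 0, ub))"
    using P1 P2 P3 by blast
qed

theorem theorem3:
  fixes L :: "real^'s^'s" and R :: "real^'s^'s"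
    and C :: "real^'r^'r" and G :: "real^'r^'r"
    and \<Gamma> :: "real^'r^'s" and B :: "real^'m^'s"
    and Vstar :: "real^'r" and ub :: "real^'m" and Ib :: "real^'s"
    and kd ki :: real
  assumes L: "pos_def_mat L" and C: "pos_def_mat C"
    and R: "psd_mat R" and G: "psd_mat G"
    and B: "rank B = CARD('m)"
    and Vstar_pos: "\<forall>j. 0 < Vstar $ j"
    and eq1: "0 = \<Gamma> *v Vstar + R *v Ib - B *v ub"
    and eq2: "0 = transpose \<Gamma> *v Ib - G *v Vstar"
    and kd: "kd > 0" and ki: "ki > 0"
  shows
    \<comment> \<open>(a) passivity of mu_s |-> u_s'\<close>
    "(\<exists>S :: (real^'s) \<times> (real^'r) \<times> (real^'s) \<times> (real^'r) \<times> (real^'m) \<Rightarrow> real.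
        (\<forall>x. 0 \<le> S x) \<and>
        (\<forall>mu I V Jd Vd u. closed_loop_sol L C R G \<Gamma> B kd ki ub mu I V Jd Vd u \<longrightarrow>
           (\<forall>t\<ge>0. \<exists>D. ((\<lambda>\<tau>. S (I \<tau>, V \<tau>, Jd \<tau>, Vd \<tau>, u \<tau>)) has_real_derivative D) (at t within {0..})
                     \<and> D \<le> mu t \<bullet> ctrl_law kd ki ub B (mu t) (u t) (Jd t))))
     \<and>
     \<comment> \<open>(b) convergence to the set, for mu_s = 0\<close>
     ((pos_def_mat R \<and> pos_def_mat G) \<or> (pos_def_mat R \<and> rank \<Gamma> = CARD('r))
        \<or> (pos_def_mat G \<and> rank (transpose \<Gamma>) = CARD('s)) \<longrightarrow>
      (\<forall>I V Jd Vd u. closed_loop_sol L C R G \<Gamma> B kd ki ub (\<lambda>_. 0) I V Jd Vd u \<longrightarrow>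
         ((\<lambda>t. infdist (I t, V t, Jd t, Vd t, u t)
              {(I', V', Jd', Vd', u'). Vd' = 0 \<and> Jd' = 0 \<and> ctrl_law kd ki ub B 0 u' Jd' = 0 \<and> u' = ub})
          \<longlongrightarrow> 0) at_top))
     \<and>
     \<comment> \<open>(c) convergence to the unique operating point\<close>
     (((pos_def_mat R \<and> pos_def_mat G) \<or> (pos_def_mat R \<and> rank \<Gamma> = CARD('r))
        \<or> (pos_def_mat G \<and> rank (transpose \<Gamma>) = CARD('s)))
       \<and> rank (block_As R \<Gamma> G) = CARD('s + 'r) \<longrightarrow>
      (\<forall>I V Jd Vd u. closed_loop_sol L C R G \<Gamma> B kd ki ub (\<lambda>_. 0) I V Jd Vd u \<longrightarrow>
         ((\<lambda>t. (I t, V t, Jd t, Vd t, u t)) \<longlongrightarrow> (Ib, Vstar, 0, 0, ub)) at_top)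
      \<and> closed_loop_sol L C R G \<Gamma> B kd ki ub (\<lambda>_. 0) (\<lambda>_. Ib) (\<lambda>_. Vstar) (\<lambda>_. 0) (\<lambda>_. 0) (\<lambda>_. ub)
      \<and> (\<forall>I0 V0 Jd0 Vd0 u0.
           closed_loop_sol L C R G \<Gamma> B kd ki ub (\<lambda>_. 0) (\<lambda>_. I0) (\<lambda>_. V0) (\<lambda>_. Jd0) (\<lambda>_. Vd0) (\<lambda>_. u0)
           \<longrightarrow> (I0, V0, Jd0, Vd0, u0) = (Ib, Vstar, 0, 0, ub)))"
  using partA[OF L C R G kd ki, of \<Gamma> B ub] partB[OF L C R G kd ki, of \<Gamma> B ub]
    partC[OF L C R G eq1 eq2 kd ki]
  by blast

end
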